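(* Let $n=\Theta(\lambda)$ and $m=\omega(\log n)$. For $i\in[m]$ let $\mathcal{P}_i$ be any shift-invariant and 2-wise independent distribution over $\mathbb{F}_2[X_{i,1},\dots,X_{i,n}]$. For every constant $\varepsilon\in(0,\tfrac16)$ and every constant $\alpha$ with $\tfrac78+\tfrac34\varepsilon<\alpha<1$, with probability $1-\mathrm{negl}(n)$ over $\mathcal{P}=(p_1,\dots,p_m)$ with $p_i\sim\mathcal{P}_i$ independently, there exists a negligible function $\mu$ such that for all sufficiently large $\lambda$, $$\sum_{(\mathbf{x},\mathbf{e})\in\mathsf{BAD}}\big|\hat V(\mathbf{x})\hat W^{\mathcal{P}}(\mathbf{e})\big|^2=\sum_{\mathbf{e}\in\mathcal{B}}\big|\hat W^{\mathcal{P}}(\mathbf{e})\big|^2\le\mu(\lambda).$$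
   Context: Elements of $\mathbb{F}_{2^n}$ are identified with $\mathbb{F}_2^n$ via a fixed basis; $\mathrm{Tr}:\mathbb{F}_{2^n}\to\mathbb{F}_2$ is the absolute trace and for $\mathbf{e},\mathbf{y}\in\mathbb{F}_{2^n}^m$, $\mathbf{e}\cdot\mathbf{y}=\sum_j e_jy_j$. $C^\perp$ is a Reed–Solomon code over $\mathbb{F}_{2^n}$ with parameters $(m,\boldsymbol\gamma,(1-\alpha)m)$, i.e. $\{(f(\gamma_1),\dots,f(\gamma_m)):\deg f<(1-\alpha)m\}$ for distinct $\gamma_j$. $\mathsf{Decode}(\mathbf{z})$: run the Guruswami–Sudan list decoder for $C^\perp$, returning all codewords at Hamming distance (over $\mathbb{F}_{2^n}$) at most $m-\sqrt{(1-\alpha)m\cdot m}$ from $\mathbf{z}$; if exactly one listed $\mathbf{x}$ satisfies $\mathrm{hw}(\mathbf{z}-\mathbf{x})\le(\tfrac12+\varepsilon)m$, output it, else output $\mathbf{0}$. $\mathcal{B}=\{\mathbf{e}\in\mathbb{F}_{2^n}^m:\exists\mathbf{x}\in C^\perp,\ \mathsf{Decode}(\mathbf{x}+\mathbf{e})\neq\mathbf{x}\}$, and $\mathsf{BAD}=((\mathbb{F}_{2^n}^m\setminus C^\perp)\times\mathbb{F}_{2^n}^m)\cup(C^\perp\times\mathcal{B})$. $\hat V(\mathbf{x})=|C^\perp|^{-1/2}$ if $\mathbf{x}\in C^\perp$ and $0$ otherwise. With $\mathcal{R}_i=\{\mathbf{e}\in\mathbb{F}_2^n:p_i(\mathbf{e})=0\}$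 and $\mathcal{R}=\mathcal{R}_1\times\cdots\times\mathcal{R}_m$, $W^{\mathcal{P}}(\mathbf{e})=|\mathcal{R}|^{-1/2}$ if $\mathbf{e}\in\mathcal{R}$ and $0$ otherwise, and $\hat W^{\mathcal{P}}(\mathbf{e})=2^{-nm/2}\sum_{\mathbf{y}\in\mathbb{F}_{2^n}^m}W^{\mathcal{P}}(\mathbf{y})(-1)^{\mathrm{Tr}(\mathbf{e}\cdot\mathbf{y})}$. Shift-invariant: for every $\mathbf{s}$, $p(\mathbf{X}+\mathbf{s})$ with $p\sim\mathcal{P}_i$ has the same distribution as $p$. 2-wise independent: for distinct $\mathbf{x}_1,\mathbf{x}_2\in\mathbb{F}_2^n$ and $a_1,a_2\in\mathbb{F}_2$, $\Pr[p(\mathbf{x}_1)=a_1\wedge p(\mathbf{x}_2)=a_2]=\tfrac14$. *)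

theory Defs
  imports "HOL-Algebra.Ring" "HOL-Algebra.FiniteProduct" "HOL-Probability.Product_PMF" "HOL-Library.Landau_Symbols"
begin

definition negligible_fun :: "(nat \<Rightarrow> real) \<Rightarrow> bool" where
  "negligible_fun f \<longleftrightarrow> (\<forall>c::nat. \<forall>\<^sub>F x in sequentially. \<bar>f x\<bar> < inverse (real x ^ c))"

definition bitvecs :: "nat \<Rightarrow> bool list set" where
  "bitvecs n = {v. length v = n}"

definition bvadd :: "bool list \<Rightarrow> bool list \<Rightarrow> bool list" where
  "bvadd u v = map2 (\<noteq>) u v"

text \<open>A polynomial in F_2[X_1..X_n] is represented by its evaluation map F_2^n -> F_2
  (only evaluations enter the statement). A distribution over such polynomials is a pmf
  over functions; only their restriction to bitvecs n is meaningful.\<close>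

definition shift_invariant :: "nat \<Rightarrow> (bool list \<Rightarrow> bool) pmf \<Rightarrow> bool" where
  "shift_invariant n D \<longleftrightarrow>
     (\<forall>s\<in>bitvecs n. map_pmf (\<lambda>p. restrict (\<lambda>x. p (bvadd x s)) (bitvecs n)) D
                   = map_pmf (\<lambda>p. restrict p (bitvecs n)) D)"

definition two_wise_independent :: "nat \<Rightarrow> (bool list \<Rightarrow> bool) pmf \<Rightarrow> bool" where
  "two_wise_independent n D \<longleftrightarrow>
     (\<forall>x1\<in>bitvecs n. \<forall>x2\<in>bitvecs n. \<forall>a1 a2. x1 \<noteq> x2 \<longrightarrow>
        measure_pmf.prob D {p. p x1 = a1 \<and> p x2 = a2} = 1/4)"

text \<open>F is a field with 2^n elements; phi is the coordinate map w.r.t. a fixed F_2-basis,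
  i.e. an additive bijection from the carrier onto F_2^n.\<close>

definition field_with_basis :: "('a, 'b) ring_scheme \<Rightarrow> nat \<Rightarrow> ('a \<Rightarrow> bool list) \<Rightarrow> bool" where
  "field_with_basis F n phi \<longleftrightarrow>
     field F \<and> finite (carrier F) \<and> card (carrier F) = 2 ^ n \<and>
     bij_betw phi (carrier F) (bitvecs n) \<and>
     (\<forall>x\<in>carrier F. \<forall>y\<in>carrier F. phi (x \<oplus>\<^bsub>F\<^esub> y) = bvadd (phi x) (phi y))"

definition trace :: "('a, 'b) ring_scheme \<Rightarrow> nat \<Rightarrow> 'a \<Rightarrow> 'a" where
  "trace F n x = finsum F (\<lambda>i. x [^]\<^bsub>F\<^esub> ((2::nat) ^ i)) {..<n}"

definition fvecs :: "('a, 'b) ring_scheme \<Rightarrow> nat \<Rightarrow> (nat \<Rightarrow> 'a) set" where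
  "fvecs F m = {..<m} \<rightarrow>\<^sub>E carrier F"

definition vadd :: "('a, 'b) ring_scheme \<Rightarrow> nat \<Rightarrow> (nat \<Rightarrow> 'a) \<Rightarrow> (nat \<Rightarrow> 'a) \<Rightarrow> nat \<Rightarrow> 'a" where
  "vadd F m x y = (\<lambda>j\<in>{..<m}. x j \<oplus>\<^bsub>F\<^esub> y j)"

definition vsub :: "('a, 'b) ring_scheme \<Rightarrow> nat \<Rightarrow> (nat \<Rightarrow> 'a) \<Rightarrow> (nat \<Rightarrow> 'a) \<Rightarrow> nat \<Rightarrow> 'a" where
  "vsub F m x y = (\<lambda>j\<in>{..<m}. x j \<ominus>\<^bsub>F\<^esub> y j)"

definition vzero :: "('a, 'b) ring_scheme \<Rightarrow> nat \<Rightarrow> nat \<Rightarrow> 'a" where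
  "vzero F m = (\<lambda>j\<in>{..<m}. \<zero>\<^bsub>F\<^esub>)"

definition vdot :: "('a, 'b) ring_scheme \<Rightarrow> nat \<Rightarrow> (nat \<Rightarrow> 'a) \<Rightarrow> (nat \<Rightarrow> 'a) \<Rightarrow> 'a" where
  "vdot F m e y = finsum F (\<lambda>j. e j \<otimes>\<^bsub>F\<^esub> y j) {..<m}"

definition hw :: "('a, 'b) ring_scheme \<Rightarrow> nat \<Rightarrow> (nat \<Rightarrow> 'a) \<Rightarrow> nat" where
  "hw F m v = card {j\<in>{..<m}. v j \<noteq> \<zero>\<^bsub>F\<^esub>}"

definition hdist :: "('a, 'b) ring_scheme \<Rightarrow> nat \<Rightarrow> (nat \<Rightarrow> 'a) \<Rightarrow> (nat \<Rightarrow> 'a) \<Rightarrow> nat" where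
  "hdist F m x y = hw F m (vsub F m x y)"

definition RS_code :: "('a, 'b) ring_scheme \<Rightarrow> nat \<Rightarrow> (nat \<Rightarrow> 'a) \<Rightarrow> real \<Rightarrow> (nat \<Rightarrow> 'a) set" where
  "RS_code F m gamma k =
     {(\<lambda>j\<in>{..<m}. finsum F (\<lambda>i. c i \<otimes>\<^bsub>F\<^esub> (gamma j [^]\<^bsub>F\<^esub> i)) {i. real i < k})
      | c. c \<in> {i. real i < k} \<rightarrow>\<^sub>E carrier F}"

text \<open>The Guruswami--Sudan list decoder is modelled by its specification: it returns
  exactly the codewords within Hamming distance m - sqrt((1-alpha) m * m).\<close>

definition GS_list :: "('a, 'b) ring_scheme \<Rightarrow> nat \<Rightarrow> (nat \<Rightarrow> 'a) \<Rightarrow> real \<Rightarrow> (nat \<Rightarrow> 'a) \<Rightarrow> (nat \<Rightarrow> 'a) set" where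
  "GS_list F m gamma \<alpha> z =
     {x \<in> RS_code F m gamma ((1 - \<alpha>) * real m).
        real (hdist F m z x) \<le> real m - sqrt ((1 - \<alpha>) * real m * real m)}"

definition Decode :: "('a, 'b) ring_scheme \<Rightarrow> nat \<Rightarrow> (nat \<Rightarrow> 'a) \<Rightarrow> real \<Rightarrow> real \<Rightarrow> (nat \<Rightarrow> 'a) \<Rightarrow> nat \<Rightarrow> 'a" where
  "Decode F m gamma \<alpha> \<epsilon> z =
     (let Cand = {x \<in> GS_list F m gamma \<alpha> z. real (hw F m (vsub F m z x)) \<le> (1/2 + \<epsilon>) * real m}
      in if (\<exists>!x. x \<in> Cand) then (THE x. x \<in> Cand) else vzero F m)"

definition bad_errors :: "('a, 'b) ring_scheme \<Rightarrow> nat \<Rightarrow> (nat \<Rightarrow> 'a) \<Rightarrow> real \<Rightarrow> real \<Rightarrow> (nat \<Rightarrow> 'a) set" where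
  "bad_errors F m gamma \<alpha> \<epsilon> =
     {e \<in> fvecs F m. \<exists>x\<in>RS_code F m gamma ((1 - \<alpha>) * real m).
        Decode F m gamma \<alpha> \<epsilon> (vadd F m x e) \<noteq> x}"

definition BAD :: "('a, 'b) ring_scheme \<Rightarrow> nat \<Rightarrow> (nat \<Rightarrow> 'a) \<Rightarrow> real \<Rightarrow> real \<Rightarrow> ((nat \<Rightarrow> 'a) \<times> (nat \<Rightarrow> 'a)) set" where
  "BAD F m gamma \<alpha> \<epsilon> =
     ((fvecs F m - RS_code F m gamma ((1 - \<alpha>) * real m)) \<times> fvecs F m)
     \<union> (RS_code F m gamma ((1 - \<alpha>) * real m) \<times> bad_errors F m gamma \<alpha> \<epsilon>)"

definition Vhat :: "('a, 'b) ring_scheme \<Rightarrow> nat \<Rightarrow> (nat \<Rightarrow> 'a) \<Rightarrow> real \<Rightarrow> (nat \<Rightarrow> 'a) \<Rightarrow> real" where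
  "Vhat F m gamma \<alpha> x =
     (if x \<in> RS_code F m gamma ((1 - \<alpha>) * real m)
      then 1 / sqrt (real (card (RS_code F m gamma ((1 - \<alpha>) * real m)))) else 0)"

definition Rset :: "nat \<Rightarrow> nat \<Rightarrow> (nat \<Rightarrow> bool list \<Rightarrow> bool) \<Rightarrow> (nat \<Rightarrow> bool list) set" where
  "Rset n m P = (\<Pi>\<^sub>E i\<in>{..<m}. {v \<in> bitvecs n. P i v = False})"

definition W :: "('a, 'b) ring_scheme \<Rightarrow> nat \<Rightarrow> nat \<Rightarrow> ('a \<Rightarrow> bool list) \<Rightarrow> (nat \<Rightarrow> bool list \<Rightarrow> bool) \<Rightarrow> (nat \<Rightarrow> 'a) \<Rightarrow> real" where
  "W F n m phi P y =
     (if (\<lambda>j\<in>{..<m}. phi (y j)) \<in> Rset n m P then 1 / sqrt (real (card (Rset n m P))) else 0)"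

definition What :: "('a, 'b) ring_scheme \<Rightarrow> nat \<Rightarrow> nat \<Rightarrow> ('a \<Rightarrow> bool list) \<Rightarrow> (nat \<Rightarrow> bool list \<Rightarrow> bool) \<Rightarrow> (nat \<Rightarrow> 'a) \<Rightarrow> real" where
  "What F n m phi P e =
     2 powr (- (real n * real m) / 2) *
     (\<Sum>y\<in>fvecs F m. W F n m phi P y *
         (if trace F n (vdot F m e y) = \<zero>\<^bsub>F\<^esub> then 1 else -1))"

end

theory Submission imports Defs "HOL-Algebra.Multiplicative_Group" begin

lemma bvadd_self: "bvadd v v = replicate (length v) False"
  unfolding bvadd_def by (induct v) auto


lemma (in domain) finsum_poly_roots:
  assumes fin: "finite (carrier R)" and c: "c \<in> {..D} \<rightarrow> carrier R" and cD: "c D \<noteq> \<zero>"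
  shows "card {a \<in> carrier R. (\<Oplus>i\<in>{..D}. c i \<otimes> a [^] i) = \<zero>} \<le> D"
proof -
  interpret U: UP_domain R "UP R" by unfold_locales
  define f where "f = (\<lambda>i. if i \<le> D then c i else \<zero>)"
  have fup: "f \<in> up R"
  proof (rule mem_upI)
    show "\<And>i. f i \<in> carrier R" using c by (auto simp: f_def Pi_def)
    show "\<exists>m. bound \<zero> m f" by (rule exI[of _ D]) (auto simp: f_def bound_def)
  qed
  then have fP: "f \<in> carrier (UP R)" by (simp add: UP_def)
  have coeff: "coeff (UP R) f = f" using fup by (simp add: UP_def)
  have cf: "\<And>i. coeff (UP R) f i = (if i \<le> D then c i else \<zero>)" using coeff by (simp add: f_def)
  have deg: "deg R f = D"
  proof (rule antisym)
    show "deg R f \<le> D" by (rule U.deg_aboveI) (use fP in \<open>auto simp: cf\<close>)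
    show "D \<le> deg R f" by (rule U.deg_belowI) (use fP cD in \<open>auto simp: cf\<close>)
  qed
  have nz: "f \<noteq> \<zero>\<^bsub>UP R\<^esub>"
  proof
    assume "f = \<zero>\<^bsub>UP R\<^esub>"
    then have "coeff (UP R) f D = \<zero>" by simp
    then show False using cD by (simp add: cf)
  qed
  have ev: "eval R R id a f = (\<Oplus>i\<in>{..D}. c i \<otimes> a [^] i)" if a: "a \<in> carrier R" for a
  proof -
    have "eval R R id a f = (\<Oplus>i\<in>{..D}. f i \<otimes> a [^] i)"
      using U.eval_on_carrier[OF fP, of R id a] by (simp add: coeff deg)
    also have "\<dots> = (\<Oplus>i\<in>{..D}. c i \<otimes> a [^] i)"
      by (rule finsum_cong') (use c a in \<open>auto simp: f_def Pi_def\<close>)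
    finally show ?thesis .
  qed
  have "card {a \<in> carrier R. eval R R id a f = \<zero>} \<le> deg R f"
    using U.roots_bound[OF fP nz fin] by blast
  moreover have "{a \<in> carrier R. eval R R id a f = \<zero>} = {a \<in> carrier R. (\<Oplus>i\<in>{..D}. c i \<otimes> a [^] i) = \<zero>}"
    using ev by auto
  ultimately show ?thesis using deg by simp
qed

context
  fixes F :: "('a,'b) ring_scheme" and n :: nat and phi
  assumes fwb: "field_with_basis F n phi"
begin

lemma fwb_field: "field F" using fwb unfolding field_with_basis_def by auto

interpretation field F by (rule fwb_field)

lemma fwb_finite: "finite (carrier F)" using fwb unfolding field_with_basis_def by auto
lemma fwb_card: "card (carrier F) = 2^n" using fwb unfolding field_with_basis_def by auto
lemma fwb_bij: "bij_betw phi (carrier F) (bitvecs n)" using fwb unfolding field_with_basis_def by auto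
lemma fwb_add: "x \<in> carrier F \<Longrightarrow> y \<in> carrier F \<Longrightarrow> phi (x \<oplus>\<^bsub>F\<^esub> y) = bvadd (phi x) (phi y)"
  using fwb unfolding field_with_basis_def by auto

lemma char2: assumes x: "x \<in> carrier F" shows "x \<oplus>\<^bsub>F\<^esub> x = \<zero>\<^bsub>F\<^esub>"
proof -
  have "phi x \<in> bitvecs n" "phi \<zero>\<^bsub>F\<^esub> \<in> bitvecs n" using fwb_bij x by (auto simp: bij_betw_def)
  then have l: "length (phi x) = n" "length (phi \<zero>\<^bsub>F\<^esub>) = n" by (auto simp: bitvecs_def)
  have "phi (x \<oplus>\<^bsub>F\<^esub> x) = replicate n False" using fwb_add[OF x x] l bvadd_self by simp
  moreover have "phi (\<zero>\<^bsub>F\<^esub>) = replicate n False"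
    using fwb_add[of "\<zero>\<^bsub>F\<^esub>" "\<zero>\<^bsub>F\<^esub>"] l bvadd_self by simp
  ultimately have "phi (x \<oplus>\<^bsub>F\<^esub> x) = phi \<zero>\<^bsub>F\<^esub>" by simp
  then show ?thesis using fwb_bij x by (auto simp: bij_betw_def inj_on_def)
qed

lemma minus_eq_plus: "x \<in> carrier F \<Longrightarrow> y \<in> carrier F \<Longrightarrow> x \<ominus>\<^bsub>F\<^esub> y = x \<oplus>\<^bsub>F\<^esub> y"
  by (metis a_minus_def add.inv_closed add.inv_comm add.inv_equality char2 local.minus_minus)

lemma add_eq_zero_iff: "x \<in> carrier F \<Longrightarrow> y \<in> carrier F \<Longrightarrow> (x \<oplus>\<^bsub>F\<^esub> y = \<zero>\<^bsub>F\<^esub>) = (x = y)"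
  by (metis minus_eq_plus r_right_minus_eq)

lemma frob_sq: assumes x: "x \<in> carrier F" and y: "y \<in> carrier F"
  shows "(x \<oplus>\<^bsub>F\<^esub> y) [^]\<^bsub>F\<^esub> (2::nat) = x [^]\<^bsub>F\<^esub> (2::nat) \<oplus>\<^bsub>F\<^esub> y [^]\<^bsub>F\<^esub> (2::nat)"
proof -
  have "(x \<oplus>\<^bsub>F\<^esub> y) [^]\<^bsub>F\<^esub> (2::nat) = (x \<oplus>\<^bsub>F\<^esub> y) \<otimes>\<^bsub>F\<^esub> (x \<oplus>\<^bsub>F\<^esub> y)"
    using x y by (simp add: numeral_2_eq_2)
  also have "\<dots> = x \<otimes>\<^bsub>F\<^esub> x \<oplus>\<^bsub>F\<^esub> ((x \<otimes>\<^bsub>F\<^esub> y \<oplus>\<^bsub>F\<^esub> x \<otimes>\<^bsub>F\<^esub> y) \<oplus>\<^bsub>F\<^esub> y \<otimes>\<^bsub>F\<^esub> y)"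
    using x y by (simp add: l_distr r_distr a_ac m_comm)
  also have "\<dots> = x \<otimes>\<^bsub>F\<^esub> x \<oplus>\<^bsub>F\<^esub> y \<otimes>\<^bsub>F\<^esub> y" using x y by (simp add: char2)
  finally show ?thesis using x y by (simp add: numeral_2_eq_2)
qed

lemma frob_pow: assumes x: "x \<in> carrier F" and y: "y \<in> carrier F"
  shows "(x \<oplus>\<^bsub>F\<^esub> y) [^]\<^bsub>F\<^esub> ((2::nat)^i) = x [^]\<^bsub>F\<^esub> ((2::nat)^i) \<oplus>\<^bsub>F\<^esub> y [^]\<^bsub>F\<^esub> ((2::nat)^i)"
proof (induct i)
  case 0 then show ?case using x y by simp
next
  case (Suc i)
  have e: "\<And>z. z \<in> carrier F \<Longrightarrow> z [^]\<^bsub>F\<^esub> ((2::nat)^Suc i) = (z [^]\<^bsub>F\<^esub> ((2::nat)^i)) [^]\<^bsub>F\<^esub> (2::nat)"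
    by (simp add: nat_pow_pow mult.commute)
  have "(x \<oplus>\<^bsub>F\<^esub> y) [^]\<^bsub>F\<^esub> ((2::nat)^Suc i) = ((x \<oplus>\<^bsub>F\<^esub> y) [^]\<^bsub>F\<^esub> ((2::nat)^i)) [^]\<^bsub>F\<^esub> (2::nat)"
    using x y by (intro e) simp
  also have "\<dots> = x [^]\<^bsub>F\<^esub> ((2::nat)^Suc i) \<oplus>\<^bsub>F\<^esub> y [^]\<^bsub>F\<^esub> ((2::nat)^Suc i)"
    using x y by (simp only: Suc e) (simp add: frob_sq)
  finally show ?case .
qed

lemma trace_closed: "x \<in> carrier F \<Longrightarrow> trace F n x \<in> carrier F"
  unfolding trace_def by (auto intro: finsum_closed)

lemma trace_add: assumes x: "x \<in> carrier F" and y: "y \<in> carrier F"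
  shows "trace F n (x \<oplus>\<^bsub>F\<^esub> y) = trace F n x \<oplus>\<^bsub>F\<^esub> trace F n y"
  unfolding trace_def using x y by (simp add: frob_pow finsum_addf)

lemma sq_finsum: assumes "finite A" "f \<in> A \<rightarrow> carrier F"
  shows "(finsum F f A) [^]\<^bsub>F\<^esub> (2::nat) = finsum F (\<lambda>i. f i [^]\<^bsub>F\<^esub> (2::nat)) A"
  using assms
proof (induct A rule: finite_induct)
  case empty then show ?case by (simp add: numeral_2_eq_2)
next
  case (insert a A)
  then show ?case by (simp add: finsum_insert frob_sq finsum_closed Pi_def)
qed

lemma pow_card: assumes x: "x \<in> carrier F" shows "x [^]\<^bsub>F\<^esub> ((2::nat)^n) = x"
proof (cases "x = \<zero>\<^bsub>F\<^esub>")
  case True then show ?thesis by (simp add: nat_pow_zero)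
next
  case False
  interpret G: group "mult_of F" by (rule field_mult_group)
  have xm: "x \<in> carrier (mult_of F)" using x False by simp
  have "x [^]\<^bsub>mult_of F\<^esub> order (mult_of F) = \<one>\<^bsub>mult_of F\<^esub>"
    using G.pow_order_eq_1[OF xm] .
  then have "x [^]\<^bsub>F\<^esub> ((2::nat)^n - 1) = \<one>\<^bsub>F\<^esub>"
    using order_mult_of[OF fwb_finite] fwb_card by (simp add: nat_pow_mult_of order_def)
  moreover have "(2::nat)^n = Suc ((2::nat)^n - 1)" by simp
  ultimately have "x [^]\<^bsub>F\<^esub> ((2::nat)^n) = \<one>\<^bsub>F\<^esub> \<otimes>\<^bsub>F\<^esub> x"
    by (metis nat_pow_Suc)
  then show ?thesis using x by simp
qed


lemma finsum_shift:
  assumes g: "g \<in> UNIV \<rightarrow> carrier F"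
  shows "finsum F g {..<Suc k} = g 0 \<oplus>\<^bsub>F\<^esub> finsum F (\<lambda>i. g (Suc i)) {..<k}"
proof -
  have "{..<Suc k} = insert 0 (Suc ` {..<k})" by (auto simp: lessThan_Suc_eq_insert_0)
  then have "finsum F g {..<Suc k} = g 0 \<oplus>\<^bsub>F\<^esub> finsum F g (Suc ` {..<k})"
    using g by (simp add: finsum_insert Pi_def)
  also have "finsum F g (Suc ` {..<k}) = finsum F (\<lambda>i. g (Suc i)) {..<k}"
    using g by (subst finsum_reindex) (auto simp: Pi_def)
  finally show ?thesis .
qed

lemma trace_sq: assumes x: "x \<in> carrier F"
  shows "trace F n x \<otimes>\<^bsub>F\<^esub> trace F n x = trace F n x"
proof -
  define g where "g = (\<lambda>i::nat. x [^]\<^bsub>F\<^esub> ((2::nat)^i))"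
  have g: "g \<in> UNIV \<rightarrow> carrier F" using x by (simp add: g_def)
  have T: "trace F n x = finsum F g {..<n}" by (simp add: trace_def g_def)
  have "trace F n x \<otimes>\<^bsub>F\<^esub> trace F n x = (trace F n x) [^]\<^bsub>F\<^esub> (2::nat)"
    using trace_closed[OF x] by (simp add: numeral_2_eq_2)
  also have "\<dots> = finsum F (\<lambda>i. g i [^]\<^bsub>F\<^esub> (2::nat)) {..<n}"
    unfolding T using g by (intro sq_finsum) auto
  also have "\<dots> = finsum F (\<lambda>i. g (Suc i)) {..<n}"
    using x by (intro finsum_cong') (auto simp: g_def nat_pow_pow mult.commute)
  finally have E: "trace F n x \<otimes>\<^bsub>F\<^esub> trace F n x = finsum F (\<lambda>i. g (Suc i)) {..<n}" .
  have A: "finsum F g {..<Suc n} = g n \<oplus>\<^bsub>F\<^esub> finsum F g {..<n}"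
    using g by (simp add: lessThan_Suc finsum_insert Pi_def)
  have B: "finsum F g {..<Suc n} = g 0 \<oplus>\<^bsub>F\<^esub> finsum F (\<lambda>i. g (Suc i)) {..<n}"
    by (rule finsum_shift[OF g])
  have g0: "g 0 = x" using x by (simp add: g_def)
  have gn: "g n = x" using pow_card[OF x] by (simp add: g_def)
  have "x \<oplus>\<^bsub>F\<^esub> finsum F (\<lambda>i. g (Suc i)) {..<n} = x \<oplus>\<^bsub>F\<^esub> trace F n x"
    using A B g0 gn T by simp
  then have "finsum F (\<lambda>i. g (Suc i)) {..<n} = trace F n x"
  proof -
    have "finsum F (\<lambda>i. g (Suc i)) {..<n} \<in> carrier F" using g by (auto intro!: finsum_closed simp: Pi_def)
    moreover have "\<And>a. a \<in> carrier F \<Longrightarrow> x \<oplus>\<^bsub>F\<^esub> (x \<oplus>\<^bsub>F\<^esub> a) = a"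
      using x by (simp add: a_assoc[symmetric] char2)
    ultimately show ?thesis using x trace_closed[OF x] \<open>x \<oplus>\<^bsub>F\<^esub> finsum F (\<lambda>i. g (Suc i)) {..<n} = x \<oplus>\<^bsub>F\<^esub> trace F n x\<close>
      by metis
  qed
  then show ?thesis using E by simp
qed

lemma trace_01: assumes x: "x \<in> carrier F"
  shows "trace F n x = \<zero>\<^bsub>F\<^esub> \<or> trace F n x = \<one>\<^bsub>F\<^esub>"
proof (cases "trace F n x = \<zero>\<^bsub>F\<^esub>")
  case True then show ?thesis by simp
next
  case False
  then have nz: "trace F n x \<noteq> \<zero>\<^bsub>F\<^esub>" .
  have "trace F n x \<otimes>\<^bsub>F\<^esub> trace F n x = trace F n x \<otimes>\<^bsub>F\<^esub> \<one>\<^bsub>F\<^esub>"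
    using trace_sq[OF x] trace_closed[OF x] by simp
  then show ?thesis
    using m_lcancel[OF nz trace_closed[OF x] trace_closed[OF x] one_closed] by simp
qed


end

definition chr :: "('a, 'b) ring_scheme \<Rightarrow> nat \<Rightarrow> 'a \<Rightarrow> real" where
  "chr F n z = (if trace F n z = \<zero>\<^bsub>F\<^esub> then 1 else -1)"

context
  fixes F :: "('a,'b) ring_scheme" and n :: nat and phi
  assumes fwb: "field_with_basis F n phi"
begin

interpretation field F by (rule fwb_field[OF fwb])

lemma chr_add: assumes x: "x \<in> carrier F" and y: "y \<in> carrier F"
  shows "chr F n (x \<oplus>\<^bsub>F\<^esub> y) = chr F n x * chr F n y"
proof -
  have o: "\<one>\<^bsub>F\<^esub> \<oplus>\<^bsub>F\<^esub> \<one>\<^bsub>F\<^esub> = \<zero>\<^bsub>F\<^esub>" by (rule char2[OF fwb]) simp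
  show ?thesis
    using trace_01[OF fwb x] trace_01[OF fwb y] trace_add[OF fwb x y] o
    by (auto simp: chr_def)
qed

lemma chr_zero: "chr F n \<zero>\<^bsub>F\<^esub> = 1"
proof -
  have "trace F n \<zero>\<^bsub>F\<^esub> = \<zero>\<^bsub>F\<^esub>"
  proof -
    have "\<And>i. \<zero>\<^bsub>F\<^esub> [^]\<^bsub>F\<^esub> ((2::nat)^i) = \<zero>\<^bsub>F\<^esub>" by (simp add: nat_pow_zero)
    then show ?thesis by (simp add: trace_def)
  qed
  then show ?thesis by (simp add: chr_def)
qed

lemma chr_finsum: assumes "finite A" "f \<in> A \<rightarrow> carrier F"
  shows "chr F n (finsum F f A) = (\<Prod>i\<in>A. chr F n (f i))"
  using assms
proof (induct A rule: finite_induct)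
  case empty then show ?case by (simp add: chr_zero)
next
  case (insert a A)
  then show ?case by (simp add: finsum_insert chr_add finsum_closed)
qed

lemma trace_nondeg: assumes n: "n \<ge> 1" shows "\<exists>b\<in>carrier F. trace F n b \<noteq> \<zero>\<^bsub>F\<^esub>"
proof (rule ccontr)
  assume "\<not> ?thesis"
  then have all: "\<forall>b\<in>carrier F. trace F n b = \<zero>\<^bsub>F\<^esub>" by auto
  define D where "D = (2::nat)^(n-1)"
  define c where "c = (\<lambda>k. if k \<in> (\<lambda>i. (2::nat)^i) ` {..<n} then \<one>\<^bsub>F\<^esub> else \<zero>\<^bsub>F\<^esub>)"
  have cD: "c D \<noteq> \<zero>\<^bsub>F\<^esub>" using n by (auto simp: c_def D_def)
  have sub: "(\<lambda>i. (2::nat)^i) ` {..<n} \<subseteq> {..D}" using n by (auto simp: D_def)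
  have ev: "(\<Oplus>\<^bsub>F\<^esub>k\<in>{..D}. c k \<otimes>\<^bsub>F\<^esub> a [^]\<^bsub>F\<^esub> k) = trace F n a" if a: "a \<in> carrier F" for a
  proof -
    have "(\<Oplus>\<^bsub>F\<^esub>k\<in>{..D}. c k \<otimes>\<^bsub>F\<^esub> a [^]\<^bsub>F\<^esub> k) = (\<Oplus>\<^bsub>F\<^esub>k\<in>(\<lambda>i. (2::nat)^i) ` {..<n}. a [^]\<^bsub>F\<^esub> k)"
      by (rule add.finprod_mono_neutral_cong_right) (use sub a in \<open>auto simp: c_def\<close>)
    also have "\<dots> = trace F n a"
      unfolding trace_def using a by (subst finsum_reindex) (auto simp: inj_on_def)
    finally show ?thesis .
  qed
  have "card {a \<in> carrier F. (\<Oplus>\<^bsub>F\<^esub>k\<in>{..D}. c k \<otimes>\<^bsub>F\<^esub> a [^]\<^bsub>F\<^esub> k) = \<zero>\<^bsub>F\<^esub>} \<le> D"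
    by (rule finsum_poly_roots[where c=c and D=D]) (use fwb_finite[OF fwb] cD in \<open>auto simp: c_def\<close>)
  moreover have "{a \<in> carrier F. (\<Oplus>\<^bsub>F\<^esub>k\<in>{..D}. c k \<otimes>\<^bsub>F\<^esub> a [^]\<^bsub>F\<^esub> k) = \<zero>\<^bsub>F\<^esub>} = carrier F"
    using ev all by auto
  ultimately have "card (carrier F) \<le> D" by simp
  then have "(2::nat)^n \<le> 2^(n-1)" using fwb_card[OF fwb] unfolding D_def by linarith
  moreover have "(2::nat)^(n-1) < 2^n" using n by simp
  ultimately show False by linarith
qed


lemma add_cancel2: "a \<in> carrier F \<Longrightarrow> b \<in> carrier F \<Longrightarrow> (a \<oplus>\<^bsub>F\<^esub> b) \<oplus>\<^bsub>F\<^esub> a = b"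
  by (simp add: a_comm[of a b] a_assoc char2[OF fwb])

lemma add_solve: assumes "a \<in> carrier F" "b \<in> carrier F" "c \<in> carrier F"
  shows "(a \<oplus>\<^bsub>F\<^esub> b = c) = (b = c \<oplus>\<^bsub>F\<^esub> a)"
proof
  assume "a \<oplus>\<^bsub>F\<^esub> b = c" then show "b = c \<oplus>\<^bsub>F\<^esub> a" using assms add_cancel2 by metis
next
  assume "b = c \<oplus>\<^bsub>F\<^esub> a" then show "a \<oplus>\<^bsub>F\<^esub> b = c" using assms add_cancel2 a_comm by metis
qed

lemma add_bij: assumes b: "b \<in> carrier F"
  shows "bij_betw (\<lambda>a. a \<oplus>\<^bsub>F\<^esub> b) (carrier F) (carrier F)"
  by (rule bij_betwI[where g="\<lambda>a. a \<oplus>\<^bsub>F\<^esub> b"]) (use b in \<open>auto simp: a_assoc char2[OF fwb]\<close>)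

lemma mult_bij: assumes b: "b \<in> carrier F" "b \<noteq> \<zero>\<^bsub>F\<^esub>"
  shows "bij_betw (\<lambda>a. a \<otimes>\<^bsub>F\<^esub> b) (carrier F) (carrier F)"
proof -
  have bu: "b \<in> Units F" using b field_Units by auto
  show ?thesis
    by (rule bij_betwI[where g="\<lambda>a. a \<otimes>\<^bsub>F\<^esub> inv\<^bsub>F\<^esub> b"]) (use b bu in \<open>auto simp: m_assoc\<close>)
qed

lemma chr_sum_zero: assumes n: "n \<ge> 1" shows "(\<Sum>a\<in>carrier F. chr F n a) = 0"
proof -
  obtain b where b: "b \<in> carrier F" "trace F n b \<noteq> \<zero>\<^bsub>F\<^esub>" using trace_nondeg[OF n] by blast
  have cb: "chr F n b = -1" using b by (simp add: chr_def)
  have "(\<Sum>a\<in>carrier F. chr F n a) = (\<Sum>a\<in>carrier F. chr F n (a \<oplus>\<^bsub>F\<^esub> b))"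
    using sum.reindex_bij_betw[OF add_bij[OF b(1)], of "chr F n"] by simp
  also have "\<dots> = - (\<Sum>a\<in>carrier F. chr F n a)"
    using b(1) by (simp add: chr_add cb sum_negf)
  finally show ?thesis by simp
qed

lemma chr_sum_mult: assumes n: "n \<ge> 1" and z: "z \<in> carrier F"
  shows "(\<Sum>a\<in>carrier F. chr F n (a \<otimes>\<^bsub>F\<^esub> z)) = (if z = \<zero>\<^bsub>F\<^esub> then 2^n else 0)"
proof (cases "z = \<zero>\<^bsub>F\<^esub>")
  case True
  then show ?thesis by (simp add: chr_zero fwb_card[OF fwb])
next
  case False
  have "(\<Sum>a\<in>carrier F. chr F n (a \<otimes>\<^bsub>F\<^esub> z)) = (\<Sum>a\<in>carrier F. chr F n a)"
    using sum.reindex_bij_betw[OF mult_bij[OF z False], of "chr F n"] by simp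
  then show ?thesis using chr_sum_zero[OF n] False by simp
qed

lemma chr_sq: "chr F n a * chr F n a = 1" by (simp add: chr_def)

end

lemma abs_chr: "\<bar>chr F n z\<bar> = 1" by (simp add: chr_def)

definition Zs :: "('a, 'b) ring_scheme \<Rightarrow> ('a \<Rightarrow> bool list) \<Rightarrow> (bool list \<Rightarrow> bool) \<Rightarrow> 'a set" where
  "Zs F phi p = {y \<in> carrier F. \<not> p (phi y)}"

definition csum :: "('a, 'b) ring_scheme \<Rightarrow> nat \<Rightarrow> ('a \<Rightarrow> bool list) \<Rightarrow> (bool list \<Rightarrow> bool) \<Rightarrow> 'a \<Rightarrow> real" where
  "csum F n phi p a = (\<Sum>y\<in>Zs F phi p. chr F n (a \<otimes>\<^bsub>F\<^esub> y))"

definition qc :: "('a, 'b) ring_scheme \<Rightarrow> nat \<Rightarrow> ('a \<Rightarrow> bool list) \<Rightarrow> (bool list \<Rightarrow> bool) \<Rightarrow> 'a \<Rightarrow> real" where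
  "qc F n phi p a = (csum F n phi p a)^2 / (2^n * real (card (Zs F phi p)))"

context
  fixes F :: "('a,'b) ring_scheme" and n :: nat and phi
  assumes fwb: "field_with_basis F n phi"
begin

interpretation field F by (rule fwb_field[OF fwb])

lemma Zs_sub: "Zs F phi p \<subseteq> carrier F" by (auto simp: Zs_def)
lemma Zs_finite: "finite (Zs F phi p)" using Zs_sub fwb_finite[OF fwb] finite_subset by blast
lemma card_Zs: "card (Zs F phi p) \<le> 2^n"
  using card_mono[OF fwb_finite[OF fwb] Zs_sub] fwb_card[OF fwb] by simp

lemma qc_nonneg: "qc F n phi p a \<ge> 0" by (simp add: qc_def)

lemma csum_abs: "\<bar>csum F n phi p a\<bar> \<le> real (card (Zs F phi p))"
proof -
  have "\<bar>csum F n phi p a\<bar> \<le> (\<Sum>y\<in>Zs F phi p. \<bar>chr F n (a \<otimes>\<^bsub>F\<^esub> y)\<bar>)"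
    unfolding csum_def by (rule sum_abs)
  also have "\<dots> = real (card (Zs F phi p))" by (simp add: abs_chr)
  finally show ?thesis .
qed

lemma qc_le_card: "qc F n phi p a \<le> real (card (Zs F phi p)) / 2^n"
proof (cases "card (Zs F phi p) = 0")
  case True then show ?thesis by (simp add: qc_def)
next
  case False
  let ?c = "real (card (Zs F phi p))"
  have "(csum F n phi p a)^2 \<le> ?c^2"
    using power_mono[OF csum_abs[of p a] abs_ge_zero, of 2] by simp
  then have "qc F n phi p a \<le> ?c^2 / (2^n * ?c)" unfolding qc_def
    by (intro divide_right_mono) auto
  also have "\<dots> = ?c / 2^n" using False by (simp add: power2_eq_square)
  finally show ?thesis .
qed

lemma qc_le1: "qc F n phi p a \<le> 1"
proof -
  have "real (card (Zs F phi p)) / 2^n \<le> 1" using card_Zs[of p]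
    by (simp add: divide_le_eq_1)
  then show ?thesis using qc_le_card[of p a] by linarith
qed

lemma qc_zero: "qc F n phi p \<zero>\<^bsub>F\<^esub> = real (card (Zs F phi p)) / 2^n"
proof -
  have "csum F n phi p \<zero>\<^bsub>F\<^esub> = real (card (Zs F phi p))"
    unfolding csum_def using Zs_sub by (simp add: chr_zero[OF fwb] subset_iff)
  then show ?thesis unfolding qc_def by (cases "card (Zs F phi p) = 0") (auto simp: power2_eq_square)
qed

lemma parseval: assumes n: "n \<ge> 1"
  shows "(\<Sum>a\<in>carrier F. qc F n phi p a) = (if Zs F phi p = {} then 0 else 1)"
proof -
  let ?Z = "Zs F phi p"
  have "(\<Sum>a\<in>carrier F. (csum F n phi p a)^2)
      = (\<Sum>a\<in>carrier F. \<Sum>y\<in>?Z. \<Sum>y'\<in>?Z. chr F n (a \<otimes>\<^bsub>F\<^esub> (y \<oplus>\<^bsub>F\<^esub> y')))"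
  proof (rule sum.cong[OF refl])
    fix a assume a: "a \<in> carrier F"
    have "(csum F n phi p a)^2 = (\<Sum>y\<in>?Z. \<Sum>y'\<in>?Z. chr F n (a \<otimes>\<^bsub>F\<^esub> y) * chr F n (a \<otimes>\<^bsub>F\<^esub> y'))"
      unfolding csum_def power2_eq_square sum_product ..
    also have "\<dots> = (\<Sum>y\<in>?Z. \<Sum>y'\<in>?Z. chr F n (a \<otimes>\<^bsub>F\<^esub> (y \<oplus>\<^bsub>F\<^esub> y')))"
    proof -
      have "\<And>y y'. y \<in> carrier F \<Longrightarrow> y' \<in> carrier F \<Longrightarrow> chr F n (a \<otimes>\<^bsub>F\<^esub> y) * chr F n (a \<otimes>\<^bsub>F\<^esub> y') = chr F n (a \<otimes>\<^bsub>F\<^esub> (y \<oplus>\<^bsub>F\<^esub> y'))"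
        using a by (simp add: chr_add[OF fwb, symmetric] r_distr)
      then show ?thesis using Zs_sub by (intro sum.cong refl) (auto simp: subset_iff)
    qed
    finally show "(csum F n phi p a)^2 = (\<Sum>y\<in>?Z. \<Sum>y'\<in>?Z. chr F n (a \<otimes>\<^bsub>F\<^esub> (y \<oplus>\<^bsub>F\<^esub> y')))" .
  qed
  also have "\<dots> = (\<Sum>y\<in>?Z. \<Sum>y'\<in>?Z. \<Sum>a\<in>carrier F. chr F n (a \<otimes>\<^bsub>F\<^esub> (y \<oplus>\<^bsub>F\<^esub> y')))"
    by (simp add: sum.swap[of _ "carrier F"])
  also have "\<dots> = (\<Sum>y\<in>?Z. \<Sum>y'\<in>?Z. (if y = y' then 2^n else 0))"
  proof -
    have "\<And>y y'. y \<in> carrier F \<Longrightarrow> y' \<in> carrier F \<Longrightarrow> (\<Sum>a\<in>carrier F. chr F n (a \<otimes>\<^bsub>F\<^esub> (y \<oplus>\<^bsub>F\<^esub> y'))) = (if y = y' then 2^n else 0)"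
      by (simp add: chr_sum_mult[OF fwb n] add_eq_zero_iff[OF fwb])
    then show ?thesis using Zs_sub by (intro sum.cong refl) (auto simp: subset_iff)
  qed
  also have "\<dots> = (\<Sum>y\<in>?Z. 2^n)"
    using Zs_finite by (intro sum.cong refl) (simp add: sum.delta)
  also have "\<dots> = 2^n * real (card ?Z)" by simp
  finally have E: "(\<Sum>a\<in>carrier F. (csum F n phi p a)^2) = 2^n * real (card ?Z)" .
  show ?thesis
  proof (cases "?Z = {}")
    case True then show ?thesis by (simp add: qc_def)
  next
    case False
    then have "card ?Z > 0" using Zs_finite by (simp add: card_gt_0_iff)
    then show ?thesis using False unfolding qc_def sum_divide_distrib[symmetric] E by simp
  qed
qed


lemma Rset_mem: assumes y: "y \<in> fvecs F m"
  shows "((\<lambda>j\<in>{..<m}. phi (y j)) \<in> Rset n m P) = (\<forall>j<m. y j \<in> Zs F phi (P j))"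
proof -
  have "\<And>j. j < m \<Longrightarrow> y j \<in> carrier F" using y by (auto simp: fvecs_def)
  then have "\<And>j. j < m \<Longrightarrow> phi (y j) \<in> bitvecs n" using fwb_bij[OF fwb] by (auto simp: bij_betw_def)
  moreover have "\<And>j. j < m \<Longrightarrow> y j \<in> carrier F" using y by (auto simp: fvecs_def)
  ultimately show ?thesis unfolding Rset_def restrict_PiE_iff by (auto simp: Zs_def)
qed

lemma card_Rset: "card (Rset n m P) = (\<Prod>j<m. card (Zs F phi (P j)))"
proof -
  have "card {v \<in> bitvecs n. P j v = False} = card (Zs F phi (P j))" for j
  proof -
    have "phi ` Zs F phi (P j) = {v \<in> bitvecs n. P j v = False}"
    proof
      show "phi ` Zs F phi (P j) \<subseteq> {v \<in> bitvecs n. P j v = False}"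
        using fwb_bij[OF fwb] by (auto simp: Zs_def bij_betw_def)
      show "{v \<in> bitvecs n. P j v = False} \<subseteq> phi ` Zs F phi (P j)"
      proof
        fix v assume v: "v \<in> {v \<in> bitvecs n. P j v = False}"
        then have "v \<in> phi ` carrier F" using fwb_bij[OF fwb] by (auto simp: bij_betw_def)
        then obtain y where "y \<in> carrier F" "phi y = v" by blast
        then show "v \<in> phi ` Zs F phi (P j)" using v by (auto simp: Zs_def)
      qed
    qed
    moreover have "inj_on phi (Zs F phi (P j))" using fwb_bij[OF fwb] Zs_sub
      by (auto simp: bij_betw_def intro: inj_on_subset)
    ultimately show ?thesis by (metis card_image)
  qed
  then show ?thesis unfolding Rset_def by (simp add: card_PiE)
qed

end

lemma sqrt_prod: "finite A \<Longrightarrow> sqrt (\<Prod>x\<in>A. f x) = (\<Prod>x\<in>A. sqrt (f x))"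
  by (induct A rule: finite_induct) (auto simp: real_sqrt_mult)

lemma two_powr_split: "(2::real) powr (- (real n * real m) / 2) = (\<Prod>j<m. 1 / sqrt (2^n))"
proof -
  have "sqrt ((2::real)^n) = 2 powr (real n / 2)"
    by (subst powr_half_sqrt_powr) (simp_all add: powr_realpow)
  then have "(\<Prod>j<m. 1 / sqrt ((2::real)^n)) = (2 powr (- (real n / 2)))^m"
    by (simp add: powr_minus_divide)
  also have "\<dots> = 2 powr (- (real n * real m) / 2)"
    by (simp add: powr_power algebra_simps)
  finally show ?thesis by simp
qed

context
  fixes F :: "('a,'b) ring_scheme" and n :: nat and phi
  assumes fwb: "field_with_basis F n phi"
begin

interpretation field F by (rule fwb_field[OF fwb])

lemma What_factor: assumes e: "e \<in> fvecs F m"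
  shows "What F n m phi P e = (\<Prod>j<m. csum F n phi (P j) (e j) / sqrt (2^n * real (card (Zs F phi (P j)))))"
proof -
  define h where "h = (\<lambda>j a. (if a \<in> Zs F phi (P j) then 1 else 0) * (1 / sqrt (real (card (Zs F phi (P j))))) * chr F n (e j \<otimes>\<^bsub>F\<^esub> a))"
  have ecar: "\<And>j. j < m \<Longrightarrow> e j \<in> carrier F" using e by (auto simp: fvecs_def)
  have trm: "W F n m phi P y * (if trace F n (vdot F m e y) = \<zero>\<^bsub>F\<^esub> then 1 else -1) = (\<Prod>j<m. h j (y j))"
    if y: "y \<in> fvecs F m" for y
  proof -
    have ycar: "\<And>j. j < m \<Longrightarrow> y j \<in> carrier F" using y by (auto simp: fvecs_def)
    have "(if trace F n (vdot F m e y) = \<zero>\<^bsub>F\<^esub> then 1 else -1) = chr F n (vdot F m e y)"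
      by (simp add: chr_def)
    also have "\<dots> = (\<Prod>j<m. chr F n (e j \<otimes>\<^bsub>F\<^esub> y j))"
      unfolding vdot_def using ecar ycar by (intro chr_finsum[OF fwb]) auto
    finally have c: "(if trace F n (vdot F m e y) = \<zero>\<^bsub>F\<^esub> then 1 else -1) = (\<Prod>j<m. chr F n (e j \<otimes>\<^bsub>F\<^esub> y j))" .
    have w: "W F n m phi P y = (\<Prod>j<m. (if y j \<in> Zs F phi (P j) then 1 else 0) * (1 / sqrt (real (card (Zs F phi (P j))))))"
      unfolding W_def Rset_mem[OF fwb y] card_Rset[OF fwb] prod.distrib
      by (auto simp: sqrt_prod prod_dividef)
    show ?thesis unfolding c w h_def prod.distrib[symmetric] by (simp add: mult.assoc)
  qed
  have "What F n m phi P e = (\<Prod>j<m. 1 / sqrt (2^n)) * (\<Sum>y\<in>fvecs F m. \<Prod>j<m. h j (y j))"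
    unfolding What_def two_powr_split using trm by simp
  also have "(\<Sum>y\<in>fvecs F m. \<Prod>j<m. h j (y j)) = (\<Prod>j<m. \<Sum>a\<in>carrier F. h j a)"
    unfolding fvecs_def by (rule prod_sum_PiE[symmetric]) (auto simp: fwb_finite[OF fwb])
  finally have W1: "What F n m phi P e = (\<Prod>j<m. 1 / sqrt (2^n)) * (\<Prod>j<m. \<Sum>a\<in>carrier F. h j a)" .
  have hs: "\<And>j. (\<Sum>a\<in>carrier F. h j a) = (1 / sqrt (real (card (Zs F phi (P j))))) * csum F n phi (P j) (e j)"
  proof -
    fix j
    have "(\<Sum>a\<in>carrier F. h j a) = (\<Sum>a\<in>Zs F phi (P j). (1 / sqrt (real (card (Zs F phi (P j))))) * chr F n (e j \<otimes>\<^bsub>F\<^esub> a))"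
    proof -
      have "(\<Sum>a\<in>carrier F. h j a) = (\<Sum>a\<in>carrier F. if a \<in> Zs F phi (P j) then (1 / sqrt (real (card (Zs F phi (P j))))) * chr F n (e j \<otimes>\<^bsub>F\<^esub> a) else 0)"
        by (intro sum.cong) (auto simp: h_def)
      also have "\<dots> = (\<Sum>a\<in>carrier F \<inter> Zs F phi (P j). (1 / sqrt (real (card (Zs F phi (P j))))) * chr F n (e j \<otimes>\<^bsub>F\<^esub> a))"
        by (simp only: sum.inter_restrict[OF fwb_finite[OF fwb]])
      also have "carrier F \<inter> Zs F phi (P j) = Zs F phi (P j)" using Zs_sub[OF fwb] by blast
      finally show ?thesis .
    qed
    then show "(\<Sum>a\<in>carrier F. h j a) = (1 / sqrt (real (card (Zs F phi (P j))))) * csum F n phi (P j) (e j)"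
      by (simp add: csum_def sum_distrib_left)
  qed
  have "(\<Prod>j<m. 1 / sqrt (2^n)) * (\<Prod>j<m. \<Sum>a\<in>carrier F. h j a) = (\<Prod>j<m. (1 / sqrt (2^n)) * (\<Sum>a\<in>carrier F. h j a))"
    by (simp only: prod.distrib)
  also have "\<dots> = (\<Prod>j<m. csum F n phi (P j) (e j) / sqrt (2^n * real (card (Zs F phi (P j)))))"
    unfolding hs by (intro prod.cong refl) (simp add: real_sqrt_mult)
  finally show ?thesis unfolding W1 .
qed

lemma What_sq: assumes e: "e \<in> fvecs F m"
  shows "(What F n m phi P e)^2 = (\<Prod>j<m. qc F n phi (P j) (e j))"
  unfolding What_factor[OF e] qc_def prod_power_distrib
  by (intro prod.cong refl) (simp add: power_divide)

end

lemma Kset_eq: "{i::nat. real i < k} = {..<nat \<lceil>k\<rceil>}"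
  by (auto simp: zless_nat_eq_int_zless less_ceiling_iff)

definition evc :: "('a, 'b) ring_scheme \<Rightarrow> nat \<Rightarrow> (nat \<Rightarrow> 'a) \<Rightarrow> real \<Rightarrow> (nat \<Rightarrow> 'a) \<Rightarrow> nat \<Rightarrow> 'a" where
  "evc F m gamma k c = (\<lambda>j\<in>{..<m}. finsum F (\<lambda>i. c i \<otimes>\<^bsub>F\<^esub> (gamma j [^]\<^bsub>F\<^esub> i)) {i. real i < k})"

lemma RS_code_evc: "RS_code F m gamma k = evc F m gamma k ` ({i. real i < k} \<rightarrow>\<^sub>E carrier F)"
  unfolding RS_code_def evc_def by auto

context
  fixes F :: "('a,'b) ring_scheme" and n :: nat and phi and m :: nat and gamma and k :: real
  assumes fwb: "field_with_basis F n phi"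
    and gam: "gamma \<in> {..<m} \<rightarrow> carrier F" "inj_on gamma {..<m}"
begin

interpretation field F by (rule fwb_field[OF fwb])

abbreviation "KK \<equiv> {i::nat. real i < k}"
abbreviation "dd \<equiv> nat \<lceil>k\<rceil>"

lemma KK_fin: "finite KK" unfolding Kset_eq by simp
lemma card_KK: "card KK = dd" unfolding Kset_eq by simp

lemma evc_fvecs: "c \<in> KK \<rightarrow>\<^sub>E carrier F \<Longrightarrow> evc F m gamma k c \<in> fvecs F m"
  using gam unfolding evc_def fvecs_def by (auto intro!: finsum_closed simp: Pi_def PiE_def)

lemma RS_fvecs: "RS_code F m gamma k \<subseteq> fvecs F m"
  unfolding RS_code_evc using evc_fvecs by auto

lemma RS_finite: "finite (RS_code F m gamma k)"
  unfolding RS_code_evc using KK_fin fwb_finite[OF fwb] by (auto intro: finite_PiE)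

lemma RS_card: "card (RS_code F m gamma k) \<le> (2^n)^dd"
proof -
  have "card (RS_code F m gamma k) \<le> card (KK \<rightarrow>\<^sub>E carrier F)"
    unfolding RS_code_evc by (rule card_image_le) (use KK_fin fwb_finite[OF fwb] in \<open>auto intro: finite_PiE\<close>)
  also have "\<dots> = (2^n)^dd" using KK_fin by (simp add: card_PiE fwb_card[OF fwb] card_KK)
  finally show ?thesis .
qed

lemma evc_zero: "evc F m gamma k (\<lambda>i\<in>KK. \<zero>\<^bsub>F\<^esub>) = vzero F m"
proof -
  have "\<And>j. j < m \<Longrightarrow> finsum F (\<lambda>i. (\<lambda>i\<in>KK. \<zero>\<^bsub>F\<^esub>) i \<otimes>\<^bsub>F\<^esub> (gamma j [^]\<^bsub>F\<^esub> i)) KK = \<zero>\<^bsub>F\<^esub>"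
  proof -
    fix j assume j: "j < m"
    have "finsum F (\<lambda>i. (\<lambda>i\<in>KK. \<zero>\<^bsub>F\<^esub>) i \<otimes>\<^bsub>F\<^esub> (gamma j [^]\<^bsub>F\<^esub> i)) KK = finsum F (\<lambda>i. \<zero>\<^bsub>F\<^esub>) KK"
      using gam j by (intro finsum_cong') (auto simp: Pi_def)
    then show "finsum F (\<lambda>i. (\<lambda>i\<in>KK. \<zero>\<^bsub>F\<^esub>) i \<otimes>\<^bsub>F\<^esub> (gamma j [^]\<^bsub>F\<^esub> i)) KK = \<zero>\<^bsub>F\<^esub>" by simp
  qed
  then show ?thesis unfolding evc_def vzero_def by (intro restrict_ext) auto
qed

lemma vzero_RS: "vzero F m \<in> RS_code F m gamma k"
proof -
  have "(\<lambda>i\<in>KK. \<zero>\<^bsub>F\<^esub>) \<in> KK \<rightarrow>\<^sub>E carrier F" by simp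
  then show ?thesis unfolding RS_code_evc evc_zero[symmetric] by (rule imageI)
qed

lemma RS_sub: assumes x: "x \<in> RS_code F m gamma k" and x': "x' \<in> RS_code F m gamma k"
  shows "vsub F m x' x \<in> RS_code F m gamma k"
proof -
  obtain c where c: "c \<in> KK \<rightarrow>\<^sub>E carrier F" and xc: "x = evc F m gamma k c" using x unfolding RS_code_evc by auto
  obtain c' where c': "c' \<in> KK \<rightarrow>\<^sub>E carrier F" and xc': "x' = evc F m gamma k c'" using x' unfolding RS_code_evc by auto
  define c'' where "c'' = (\<lambda>i\<in>KK. c' i \<oplus>\<^bsub>F\<^esub> c i)"
  have c'': "c'' \<in> KK \<rightarrow>\<^sub>E carrier F" using c c' by (auto simp: c''_def PiE_def Pi_def)
  have "vsub F m x' x = evc F m gamma k c''"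
  proof -
    have "\<And>j. j < m \<Longrightarrow> x' j \<ominus>\<^bsub>F\<^esub> x j = finsum F (\<lambda>i. c'' i \<otimes>\<^bsub>F\<^esub> (gamma j [^]\<^bsub>F\<^esub> i)) KK"
    proof -
      fix j assume j: "j < m"
      have gj: "gamma j \<in> carrier F" using gam j by auto
      have A: "(\<lambda>i. c i \<otimes>\<^bsub>F\<^esub> (gamma j [^]\<^bsub>F\<^esub> i)) \<in> KK \<rightarrow> carrier F" using c gj by (auto simp: PiE_def Pi_def)
      have B: "(\<lambda>i. c' i \<otimes>\<^bsub>F\<^esub> (gamma j [^]\<^bsub>F\<^esub> i)) \<in> KK \<rightarrow> carrier F" using c' gj by (auto simp: PiE_def Pi_def)
      have "x' j \<ominus>\<^bsub>F\<^esub> x j = finsum F (\<lambda>i. c' i \<otimes>\<^bsub>F\<^esub> (gamma j [^]\<^bsub>F\<^esub> i)) KK \<oplus>\<^bsub>F\<^esub> finsum F (\<lambda>i. c i \<otimes>\<^bsub>F\<^esub> (gamma j [^]\<^bsub>F\<^esub> i)) KK"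
        unfolding xc xc' evc_def using j A B by (simp add: minus_eq_plus[OF fwb] finsum_closed)
      also have "\<dots> = finsum F (\<lambda>i. c' i \<otimes>\<^bsub>F\<^esub> (gamma j [^]\<^bsub>F\<^esub> i) \<oplus>\<^bsub>F\<^esub> c i \<otimes>\<^bsub>F\<^esub> (gamma j [^]\<^bsub>F\<^esub> i)) KK"
        using A B by (simp add: finsum_addf)
      also have "\<dots> = finsum F (\<lambda>i. c'' i \<otimes>\<^bsub>F\<^esub> (gamma j [^]\<^bsub>F\<^esub> i)) KK"
        using c c' gj by (intro finsum_cong') (auto simp: c''_def l_distr PiE_def Pi_def)
      finally show "x' j \<ominus>\<^bsub>F\<^esub> x j = finsum F (\<lambda>i. c'' i \<otimes>\<^bsub>F\<^esub> (gamma j [^]\<^bsub>F\<^esub> i)) KK" .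
    qed
    then show ?thesis unfolding vsub_def evc_def by (intro restrict_ext) auto
  qed
  then show ?thesis unfolding RS_code_evc using c'' by auto
qed

lemma RS_weight: assumes x: "x \<in> RS_code F m gamma k" and nz: "x \<noteq> vzero F m"
  shows "card {j\<in>{..<m}. x j = \<zero>\<^bsub>F\<^esub>} + 1 \<le> dd"
proof -
  obtain c where c: "c \<in> KK \<rightarrow>\<^sub>E carrier F" and xc: "x = evc F m gamma k c" using x unfolding RS_code_evc by auto
  have ex: "\<exists>i\<in>KK. c i \<noteq> \<zero>\<^bsub>F\<^esub>"
  proof (rule ccontr)
    assume "\<not> ?thesis"
    then have "c = (\<lambda>i\<in>KK. \<zero>\<^bsub>F\<^esub>)" using c by (auto simp: PiE_def extensional_def)
    then show False using nz xc evc_zero by simp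
  qed
  define D where "D = Max {i\<in>KK. c i \<noteq> \<zero>\<^bsub>F\<^esub>}"
  have finS: "finite {i\<in>KK. c i \<noteq> \<zero>\<^bsub>F\<^esub>}" using KK_fin by simp
  have DK: "D \<in> KK" "c D \<noteq> \<zero>\<^bsub>F\<^esub>" using Max_in[OF finS] ex unfolding D_def by auto
  have Dmax: "\<And>i. i \<in> KK \<Longrightarrow> c i \<noteq> \<zero>\<^bsub>F\<^esub> \<Longrightarrow> i \<le> D" using Max_ge[OF finS] unfolding D_def by auto
  have Dd: "D < dd" using DK unfolding Kset_eq by simp
  have sub: "{..D} \<subseteq> KK" using Dd unfolding Kset_eq by auto
  have poly: "finsum F (\<lambda>i. c i \<otimes>\<^bsub>F\<^esub> (a [^]\<^bsub>F\<^esub> i)) KK = (\<Oplus>\<^bsub>F\<^esub>i\<in>{..D}. c i \<otimes>\<^bsub>F\<^esub> a [^]\<^bsub>F\<^esub> i)"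
    if a: "a \<in> carrier F" for a
  proof -
    have z: "\<And>i. i \<in> KK - {..D} \<Longrightarrow> c i = \<zero>\<^bsub>F\<^esub>" using Dmax by fastforce
    have cc: "\<And>i. i \<in> KK \<Longrightarrow> c i \<in> carrier F" using c by (auto simp: PiE_def Pi_def)
    show ?thesis
      by (rule add.finprod_mono_neutral_cong_right[OF KK_fin sub]) (auto simp: z cc a)
  qed
  have roots: "card {a \<in> carrier F. (\<Oplus>\<^bsub>F\<^esub>i\<in>{..D}. c i \<otimes>\<^bsub>F\<^esub> a [^]\<^bsub>F\<^esub> i) = \<zero>\<^bsub>F\<^esub>} \<le> D"
    by (rule finsum_poly_roots[where c=c and D=D]) (use fwb_finite[OF fwb] DK c sub in \<open>auto simp: PiE_def Pi_def\<close>)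
  have "gamma ` {j\<in>{..<m}. x j = \<zero>\<^bsub>F\<^esub>} \<subseteq> {a \<in> carrier F. (\<Oplus>\<^bsub>F\<^esub>i\<in>{..D}. c i \<otimes>\<^bsub>F\<^esub> a [^]\<^bsub>F\<^esub> i) = \<zero>\<^bsub>F\<^esub>}"
    using gam(1) poly by (auto simp: xc evc_def Pi_def)
  then have "card (gamma ` {j\<in>{..<m}. x j = \<zero>\<^bsub>F\<^esub>}) \<le> D"
  proof -
    have "finite {a \<in> carrier F. (\<Oplus>\<^bsub>F\<^esub>i\<in>{..D}. c i \<otimes>\<^bsub>F\<^esub> a [^]\<^bsub>F\<^esub> i) = \<zero>\<^bsub>F\<^esub>}"
      using fwb_finite[OF fwb] by simp
    from card_mono[OF this \<open>gamma ` _ \<subseteq> _\<close>] roots show ?thesis by linarith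
  qed
  moreover have "card (gamma ` {j\<in>{..<m}. x j = \<zero>\<^bsub>F\<^esub>}) = card {j\<in>{..<m}. x j = \<zero>\<^bsub>F\<^esub>}"
    by (rule card_image) (rule inj_on_subset[OF gam(2)], auto)
  ultimately show ?thesis using Dd by linarith
qed


lemma card_split: "card {j\<in>{..<m::nat}. P j} + card {j\<in>{..<m}. \<not> P j} = m"
proof -
  have "card ({j\<in>{..<m}. P j} \<union> {j\<in>{..<m}. \<not> P j}) = card {j\<in>{..<m}. P j} + card {j\<in>{..<m}. \<not> P j}"
    by (rule card_Un_disjoint) auto
  moreover have "{j\<in>{..<m}. P j} \<union> {j\<in>{..<m}. \<not> P j} = {..<m}" by auto
  ultimately show ?thesis by simp
qed

lemma bad_cases:
  assumes kdef: "k = (1 - \<alpha>) * real m"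
    and rad: "(1/2 + \<epsilon>) * real m \<le> real m - sqrt ((1 - \<alpha>) * real m * real m)"
    and e: "e \<in> bad_errors F m gamma \<alpha> \<epsilon>"
  shows "e \<in> fvecs F m \<and> (real (card {j\<in>{..<m}. e j \<noteq> \<zero>\<^bsub>F\<^esub>}) > (1/2 + \<epsilon>) * real m \<or>
     (\<exists>c\<in>RS_code F m gamma k - {vzero F m}. real (card {j\<in>{..<m}. e j = c j}) \<ge> real m - (1/2 + \<epsilon>) * real m))"
proof -
  let ?t = "(1/2 + \<epsilon>) * real m"
  let ?C = "RS_code F m gamma k"
  have ef: "e \<in> fvecs F m" using e by (simp add: bad_errors_def)
  obtain x where x: "x \<in> ?C" and dec: "Decode F m gamma \<alpha> \<epsilon> (vadd F m x e) \<noteq> x"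
    using e unfolding bad_errors_def kdef by blast
  have xf: "x \<in> fvecs F m" using x RS_fvecs by auto
  have ecar: "\<And>j. j < m \<Longrightarrow> e j \<in> carrier F" using ef by (auto simp: fvecs_def)
  have xcar: "\<And>j. j < m \<Longrightarrow> x j \<in> carrier F" using xf by (auto simp: fvecs_def)
  show ?thesis
  proof (cases "real (card {j\<in>{..<m}. e j \<noteq> \<zero>\<^bsub>F\<^esub>}) > ?t")
    case True then show ?thesis using ef by simp
  next
    case False
    define z where "z = vadd F m x e"
    have vz: "vsub F m z x = e"
    proof (rule ext)
      fix j show "vsub F m z x j = e j"
      proof (cases "j < m")
        case True then show ?thesis using ecar xcar
          by (simp add: vsub_def z_def vadd_def minus_eq_plus[OF fwb] add_cancel2[OF fwb])
      next
        case False then show ?thesis using ef by (simp add: vsub_def fvecs_def PiE_def extensional_def)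
      qed
    qed
    have hwe: "hw F m e = card {j\<in>{..<m}. e j \<noteq> \<zero>\<^bsub>F\<^esub>}" by (simp add: hw_def)
    define Cand where "Cand = {x \<in> GS_list F m gamma \<alpha> z. real (hw F m (vsub F m z x)) \<le> (1/2 + \<epsilon>) * real m}"
    have le_t: "real (hw F m e) \<le> ?t" using False hwe by simp
    have xG: "x \<in> GS_list F m gamma \<alpha> z"
      unfolding GS_list_def hdist_def using x kdef le_t rad by (simp add: vz)
    have xC: "x \<in> Cand"
      unfolding Cand_def using xG le_t by (simp add: vz)
    have "\<not> (\<exists>!y. y \<in> Cand)"
    proof
      assume ex1: "\<exists>!y. y \<in> Cand"
      then have "(THE y. y \<in> Cand) = x" using xC by (intro the1_equality[where P="\<lambda>y. y \<in> Cand"])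
      then have "Decode F m gamma \<alpha> \<epsilon> z = x" unfolding Decode_def Let_def Cand_def[symmetric] using ex1 by simp
      then show False using dec z_def by simp
    qed
    then obtain x' where x'C: "x' \<in> Cand" and x'x: "x' \<noteq> x" using xC by blast
    have x': "x' \<in> ?C" using x'C kdef by (simp add: Cand_def GS_list_def)
    have x'f: "x' \<in> fvecs F m" using x' RS_fvecs by auto
    have x'car: "\<And>j. j < m \<Longrightarrow> x' j \<in> carrier F" using x'f by (auto simp: fvecs_def)
    define c where "c = vsub F m x' x"
    have cC: "c \<in> ?C" unfolding c_def by (rule RS_sub[OF x x'])
    have cnz: "c \<noteq> vzero F m"
    proof
      assume "c = vzero F m"
      then have "\<And>j. j < m \<Longrightarrow> x' j \<ominus>\<^bsub>F\<^esub> x j = \<zero>\<^bsub>F\<^esub>"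
      proof -
        fix j assume j: "j < m"
        have "c j = vzero F m j" using \<open>c = vzero F m\<close> by simp
        then show "x' j \<ominus>\<^bsub>F\<^esub> x j = \<zero>\<^bsub>F\<^esub>" using j by (simp add: c_def vsub_def vzero_def)
      qed
      then have "\<And>j. j < m \<Longrightarrow> x' j = x j" using x'car xcar by simp
      then have "x' = x" using x'f xf by (intro extensionalityI[of _ "{..<m}"]) (auto simp: fvecs_def PiE_def)
      then show False using x'x by simp
    qed
    have "real (hw F m (vsub F m z x')) \<le> ?t" using x'C by (simp add: Cand_def)
    moreover have "{j\<in>{..<m}. vsub F m z x' j \<noteq> \<zero>\<^bsub>F\<^esub>} = {j\<in>{..<m}. \<not> (e j = c j)}"
    proof -
      have "\<And>j. j < m \<Longrightarrow> (vsub F m z x' j = \<zero>\<^bsub>F\<^esub>) = (e j = c j)"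
      proof -
        fix j assume j: "j < m"
        have "vsub F m z x' j = (x j \<oplus>\<^bsub>F\<^esub> e j) \<oplus>\<^bsub>F\<^esub> x' j"
          using j xcar ecar x'car by (simp add: vsub_def z_def vadd_def minus_eq_plus[OF fwb])
        moreover have "c j = x' j \<oplus>\<^bsub>F\<^esub> x j" using j xcar x'car by (simp add: c_def vsub_def minus_eq_plus[OF fwb])
        moreover have "((x j \<oplus>\<^bsub>F\<^esub> e j) \<oplus>\<^bsub>F\<^esub> x' j = \<zero>\<^bsub>F\<^esub>) = (e j = x' j \<oplus>\<^bsub>F\<^esub> x j)"
        proof -
          have "((x j \<oplus>\<^bsub>F\<^esub> e j) \<oplus>\<^bsub>F\<^esub> x' j = \<zero>\<^bsub>F\<^esub>) = (x j \<oplus>\<^bsub>F\<^esub> e j = x' j)"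
            using j xcar ecar x'car by (simp add: add_eq_zero_iff[OF fwb])
          also have "\<dots> = (e j = x' j \<oplus>\<^bsub>F\<^esub> x j)"
            using j xcar ecar x'car by (simp add: add_solve[OF fwb])
          finally show ?thesis .
        qed
        ultimately show "(vsub F m z x' j = \<zero>\<^bsub>F\<^esub>) = (e j = c j)" by simp
      qed
      then show ?thesis by auto
    qed
    ultimately have le: "real (card {j\<in>{..<m}. \<not> (e j = c j)}) \<le> ?t" by (simp add: hw_def)
    have "card {j\<in>{..<m}. e j = c j} + card {j\<in>{..<m}. \<not> (e j = c j)} = m" by (rule card_split)
    then have "real (card {j\<in>{..<m}. e j = c j}) \<ge> real m - ?t" using le by linarith
    then show ?thesis using ef cC cnz by blast
  qed
qed

end

lemma prod_if_pow: "finite A \<Longrightarrow> (\<Prod>j\<in>A. if P j then (a::real) else 1) = a ^ card {j\<in>A. P j}"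
proof -
  assume fin: "finite A"
  have "(\<Prod>j\<in>A. if P j then a else 1) = (\<Prod>j\<in>A \<inter> {j. P j}. a) * (\<Prod>j\<in>A \<inter> - {j. P j}. 1)"
    by (rule prod.If_cases[OF fin])
  also have "\<dots> = a ^ card (A \<inter> {j. P j})" by simp
  also have "A \<inter> {j. P j} = {j\<in>A. P j}" by auto
  finally show ?thesis .
qed

definition f1 :: "('a, 'b) ring_scheme \<Rightarrow> nat \<Rightarrow> ('a \<Rightarrow> bool list) \<Rightarrow> real \<Rightarrow> (bool list \<Rightarrow> bool) \<Rightarrow> real" where
  "f1 F n phi x0 p = (\<Sum>a\<in>carrier F. qc F n phi p a * (if a = \<zero>\<^bsub>F\<^esub> then 1 else x0))"

definition f2 :: "('a, 'b) ring_scheme \<Rightarrow> nat \<Rightarrow> ('a \<Rightarrow> bool list) \<Rightarrow> 'a \<Rightarrow> (bool list \<Rightarrow> bool) \<Rightarrow> real" where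
  "f2 F n phi b p = (\<Sum>a\<in>carrier F. qc F n phi p a * (if a = b then 2^n else 1))"

definition Qb :: "('a, 'b) ring_scheme \<Rightarrow> nat \<Rightarrow> ('a \<Rightarrow> bool list) \<Rightarrow> nat \<Rightarrow> (nat \<Rightarrow> 'a) \<Rightarrow> real \<Rightarrow> real \<Rightarrow> real \<Rightarrow> (nat \<Rightarrow> bool list \<Rightarrow> bool) \<Rightarrow> real" where
  "Qb F n phi m gamma \<alpha> \<epsilon> x0 P =
     x0 powr (- ((1/2 + \<epsilon>) * real m)) * (\<Prod>j<m. f1 F n phi x0 (P j))
     + (\<Sum>c\<in>RS_code F m gamma ((1 - \<alpha>) * real m) - {vzero F m}.
          ((2::real)^n) powr (- (real m - (1/2 + \<epsilon>) * real m)) * (\<Prod>j<m. f2 F n phi (c j) (P j)))"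

lemma pointwise_bound:
  assumes fwb: "field_with_basis F n phi"
    and gam: "gamma \<in> {..<m} \<rightarrow> carrier F" "inj_on gamma {..<m}"
    and rad: "(1/2 + \<epsilon>) * real m \<le> real m - sqrt ((1 - \<alpha>) * real m * real m)"
    and x0: "x0 > 1"
  shows "(\<Sum>e\<in>bad_errors F m gamma \<alpha> \<epsilon>. \<bar>What F n m phi P e\<bar>^2) \<le> Qb F n phi m gamma \<alpha> \<epsilon> x0 P"
proof -
  let ?k = "(1 - \<alpha>) * real m"
  let ?t = "(1/2 + \<epsilon>) * real m"
  let ?C0 = "RS_code F m gamma ?k - {vzero F m}"
  let ?y = "(2::real)^n"
  let ?q = "\<lambda>e. \<Prod>j<m. qc F n phi (P j) (e j)"
  define I1 where "I1 = (\<lambda>e::nat\<Rightarrow>'a. x0 powr (real (card {j\<in>{..<m}. e j \<noteq> \<zero>\<^bsub>F\<^esub>}) - ?t))"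
  define I2 where "I2 = (\<lambda>(c::nat\<Rightarrow>'a) (e::nat\<Rightarrow>'a). ?y powr (real (card {j\<in>{..<m}. e j = c j}) - (real m - ?t)))"
  have finV: "finite (fvecs F m)" unfolding fvecs_def using fwb_finite[OF fwb] by (auto intro: finite_PiE)
  have finC: "finite ?C0" using RS_finite[OF fwb gam] by simp
  have badsub: "bad_errors F m gamma \<alpha> \<epsilon> \<subseteq> fvecs F m" by (auto simp: bad_errors_def)
  have qnn: "\<And>e. ?q e \<ge> 0" by (intro prod_nonneg) (simp add: qc_nonneg[OF fwb])
  have ypos: "?y \<ge> 1" by simp
  have ind: "1 \<le> I1 e + (\<Sum>c\<in>?C0. I2 c e)" if e: "e \<in> bad_errors F m gamma \<alpha> \<epsilon>" for e
  proof -
    have I2nn: "\<And>c. I2 c e \<ge> 0" by (simp add: I2_def)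
    have I1nn: "I1 e \<ge> 0" by (simp add: I1_def)
    from bad_cases[OF fwb gam refl rad e] consider
      (a) "real (card {j\<in>{..<m}. e j \<noteq> \<zero>\<^bsub>F\<^esub>}) > ?t"
      | (b) c where "c \<in> ?C0" "real (card {j\<in>{..<m}. e j = c j}) \<ge> real m - ?t" by blast
    then show ?thesis
    proof cases
      case a
      then have "I1 e \<ge> 1" unfolding I1_def using x0 by (intro ge_one_powr_ge_zero) auto
      moreover have "(\<Sum>c\<in>?C0. I2 c e) \<ge> 0" using I2nn by (simp add: sum_nonneg)
      ultimately show ?thesis by linarith
    next
      case (b c)
      have "I2 c e \<ge> 1" unfolding I2_def using b(2) by (intro ge_one_powr_ge_zero) auto
      moreover have "I2 c e \<le> (\<Sum>c\<in>?C0. I2 c e)" using b(1) finC I2nn by (intro member_le_sum) auto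
      ultimately show ?thesis using I1nn by linarith
    qed
  qed
  have "(\<Sum>e\<in>bad_errors F m gamma \<alpha> \<epsilon>. \<bar>What F n m phi P e\<bar>^2) = (\<Sum>e\<in>bad_errors F m gamma \<alpha> \<epsilon>. ?q e)"
    using badsub What_sq[OF fwb] by (intro sum.cong refl) auto
  also have "\<dots> \<le> (\<Sum>e\<in>bad_errors F m gamma \<alpha> \<epsilon>. ?q e * (I1 e + (\<Sum>c\<in>?C0. I2 c e)))"
  proof (rule sum_mono)
    fix e assume e: "e \<in> bad_errors F m gamma \<alpha> \<epsilon>"
    have "?q e * 1 \<le> ?q e * (I1 e + (\<Sum>c\<in>?C0. I2 c e))" by (rule mult_left_mono[OF ind[OF e] qnn])
    then show "?q e \<le> ?q e * (I1 e + (\<Sum>c\<in>?C0. I2 c e))" by simp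
  qed
  also have "\<dots> \<le> (\<Sum>e\<in>fvecs F m. ?q e * (I1 e + (\<Sum>c\<in>?C0. I2 c e)))"
  proof (rule sum_mono2[OF finV badsub])
    fix e
    have a: "I1 e \<ge> 0" by (simp add: I1_def)
    have b: "(\<Sum>c\<in>?C0. I2 c e) \<ge> 0" by (rule sum_nonneg) (simp add: I2_def)
    show "0 \<le> ?q e * (I1 e + (\<Sum>c\<in>?C0. I2 c e))" using a b qnn[of e] by simp
  qed
  also have "\<dots> = (\<Sum>e\<in>fvecs F m. ?q e * I1 e) + (\<Sum>c\<in>?C0. \<Sum>e\<in>fvecs F m. ?q e * I2 c e)"
  proof -
    have "(\<Sum>e\<in>fvecs F m. ?q e * (I1 e + (\<Sum>c\<in>?C0. I2 c e))) = (\<Sum>e\<in>fvecs F m. ?q e * I1 e) + (\<Sum>e\<in>fvecs F m. \<Sum>c\<in>?C0. ?q e * I2 c e)"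
      by (simp only: distrib_left sum.distrib sum_distrib_left)
    also have "(\<Sum>e\<in>fvecs F m. \<Sum>c\<in>?C0. ?q e * I2 c e) = (\<Sum>c\<in>?C0. \<Sum>e\<in>fvecs F m. ?q e * I2 c e)"
      by (rule sum.swap)
    finally show ?thesis .
  qed
  also have "(\<Sum>e\<in>fvecs F m. ?q e * I1 e) = x0 powr (- ?t) * (\<Prod>j<m. f1 F n phi x0 (P j))"
  proof -
    have "(\<Sum>e\<in>fvecs F m. ?q e * I1 e) = (\<Sum>e\<in>fvecs F m. x0 powr (- ?t) * (\<Prod>j<m. qc F n phi (P j) (e j) * (if e j = \<zero>\<^bsub>F\<^esub> then 1 else x0)))"
    proof (intro sum.cong refl)
      fix e
      have "I1 e = x0 powr (- ?t) * x0 ^ card {j\<in>{..<m}. e j \<noteq> \<zero>\<^bsub>F\<^esub>}"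
        unfolding I1_def using x0 by (simp add: powr_diff powr_realpow powr_minus_divide)
      also have "x0 ^ card {j\<in>{..<m}. e j \<noteq> \<zero>\<^bsub>F\<^esub>} = (\<Prod>j<m. if e j = \<zero>\<^bsub>F\<^esub> then 1 else x0)"
      proof -
        have "(\<Prod>j<m. if e j = \<zero>\<^bsub>F\<^esub> then 1 else x0) = (\<Prod>j<m. if e j \<noteq> \<zero>\<^bsub>F\<^esub> then x0 else 1)"
          by (intro prod.cong) auto
        then show ?thesis using prod_if_pow[of "{..<m}" "\<lambda>j. e j \<noteq> \<zero>\<^bsub>F\<^esub>" x0] by simp
      qed
      finally show "?q e * I1 e = x0 powr (- ?t) * (\<Prod>j<m. qc F n phi (P j) (e j) * (if e j = \<zero>\<^bsub>F\<^esub> then 1 else x0))"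
        by (simp add: prod.distrib)
    qed
    also have "\<dots> = x0 powr (- ?t) * (\<Sum>e\<in>fvecs F m. \<Prod>j<m. qc F n phi (P j) (e j) * (if e j = \<zero>\<^bsub>F\<^esub> then 1 else x0))"
      by (simp add: sum_distrib_left)
    also have "(\<Sum>e\<in>fvecs F m. \<Prod>j<m. qc F n phi (P j) (e j) * (if e j = \<zero>\<^bsub>F\<^esub> then 1 else x0)) = (\<Prod>j<m. f1 F n phi x0 (P j))"
      unfolding f1_def fvecs_def by (rule prod_sum_PiE[symmetric]) (auto simp: fwb_finite[OF fwb])
    finally show ?thesis .
  qed
  also have "(\<Sum>c\<in>?C0. \<Sum>e\<in>fvecs F m. ?q e * I2 c e) = (\<Sum>c\<in>?C0. ?y powr (- (real m - ?t)) * (\<Prod>j<m. f2 F n phi (c j) (P j)))"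
  proof (intro sum.cong refl)
    fix c
    have "(\<Sum>e\<in>fvecs F m. ?q e * I2 c e) = (\<Sum>e\<in>fvecs F m. ?y powr (- (real m - ?t)) * (\<Prod>j<m. qc F n phi (P j) (e j) * (if e j = c j then ?y else 1)))"
    proof (intro sum.cong refl)
      fix e
      have "I2 c e = ?y powr (- (real m - ?t)) * ?y ^ card {j\<in>{..<m}. e j = c j}"
        unfolding I2_def by (simp add: powr_diff powr_realpow powr_minus_divide)
      also have "?y ^ card {j\<in>{..<m}. e j = c j} = (\<Prod>j<m. if e j = c j then ?y else 1)"
        using prod_if_pow[of "{..<m}" "\<lambda>j. e j = c j" ?y] by simp
      finally show "?q e * I2 c e = ?y powr (- (real m - ?t)) * (\<Prod>j<m. qc F n phi (P j) (e j) * (if e j = c j then ?y else 1))"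
        by (simp add: prod.distrib)
    qed
    also have "\<dots> = ?y powr (- (real m - ?t)) * (\<Sum>e\<in>fvecs F m. \<Prod>j<m. qc F n phi (P j) (e j) * (if e j = c j then ?y else 1))"
      by (simp add: sum_distrib_left)
    also have "(\<Sum>e\<in>fvecs F m. \<Prod>j<m. qc F n phi (P j) (e j) * (if e j = c j then ?y else 1)) = (\<Prod>j<m. f2 F n phi (c j) (P j))"
      unfolding f2_def fvecs_def by (rule prod_sum_PiE[symmetric]) (auto simp: fwb_finite[OF fwb])
    finally show "(\<Sum>e\<in>fvecs F m. ?q e * I2 c e) = ?y powr (- (real m - ?t)) * (\<Prod>j<m. f2 F n phi (c j) (P j))" .
  qed
  finally show ?thesis unfolding Qb_def .
qed


definition sg :: "(bool list \<Rightarrow> bool) \<Rightarrow> bool list \<Rightarrow> real" where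
  "sg p v = (if p v then -1 else 1)"

lemma abs_sg: "\<bar>sg p v\<bar> = 1" by (simp add: sg_def)
lemma sg_sq: "sg p v * sg p v = 1" by (simp add: sg_def)

lemma sq_le_sq: assumes "\<bar>a::real\<bar> \<le> B" shows "a^2 \<le> B * B"
proof -
  have "\<bar>a\<bar> * \<bar>a\<bar> \<le> B * B" using assms by (intro mult_mono) auto
  then show ?thesis by (simp add: power2_eq_square abs_mult_self_eq)
qed

lemma pmf_intb: assumes "\<And>p. \<bar>f p\<bar> \<le> B" shows "integrable (measure_pmf D) (f :: _ \<Rightarrow> real)"
  by (rule measure_pmf.integrable_const_bound[where B=B]) (use assms in auto)

context
  fixes D :: "(bool list \<Rightarrow> bool) pmf" and n :: nat
  assumes tw: "two_wise_independent n D" and n1: "n \<ge> 1"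
begin

lemma tw': "x1 \<in> bitvecs n \<Longrightarrow> x2 \<in> bitvecs n \<Longrightarrow> x1 \<noteq> x2 \<Longrightarrow> measure_pmf.prob D {p. p x1 = a1 \<and> p x2 = a2} = 1/4"
  using tw unfolding two_wise_independent_def by blast

lemma E_lin_ind: "measure_pmf.expectation D (\<lambda>p. 1 - 2 * indicator A p) = 1 - 2 * measure_pmf.prob D A"
proof -
  have i1: "integrable (measure_pmf D) (\<lambda>p. 1::real)" by (rule pmf_intb[where B=1]) simp
  have i2: "integrable (measure_pmf D) (\<lambda>p. 2 * indicator A p :: real)" by (rule pmf_intb[where B=2]) (simp add: indicator_def)
  have "measure_pmf.expectation D (\<lambda>p. 1 - 2 * indicator A p) = measure_pmf.expectation D (\<lambda>p. 1::real) - measure_pmf.expectation D (\<lambda>p. 2 * indicator A p :: real)"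
    by (rule Bochner_Integration.integral_diff[OF i1 i2])
  also have "\<dots> = 1 - 2 * measure_pmf.prob D A" by (simp add: measure_pmf.prob_space)
  finally show ?thesis .
qed

lemma other_vec: assumes v: "v \<in> bitvecs n" shows "map Not v \<in> bitvecs n" "map Not v \<noteq> v"
proof -
  show "map Not v \<in> bitvecs n" using v by (simp add: bitvecs_def)
  have "v \<noteq> []" using v n1 by (auto simp: bitvecs_def)
  then show "map Not v \<noteq> v" by (cases v) auto
qed

lemma prob_single: assumes v: "v \<in> bitvecs n" shows "measure_pmf.prob D {p. p v = a} = 1/2"
proof -
  let ?w = "map Not v"
  have "{p. p v = a} = {p. p v = a \<and> p ?w = True} \<union> {p. p v = a \<and> p ?w = False}" by auto
  then have "measure_pmf.prob D {p. p v = a} = measure_pmf.prob D {p. p v = a \<and> p ?w = True} + measure_pmf.prob D {p. p v = a \<and> p ?w = False}"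
    by (simp add: measure_pmf.finite_measure_Union disjoint_iff)
  also have "\<dots> = 1/4 + 1/4"
  proof -
    have ne: "v \<noteq> map Not v" using other_vec[OF v] by metis
    show ?thesis using tw'[OF v other_vec(1)[OF v] ne, of a True] tw'[OF v other_vec(1)[OF v] ne, of a False] by simp
  qed
  finally show ?thesis by simp
qed

lemma E_sg: assumes v: "v \<in> bitvecs n" shows "measure_pmf.expectation D (\<lambda>p. sg p v) = 0"
proof -
  have "(\<lambda>p. sg p v) = (\<lambda>p. 1 - 2 * indicator {p. p v = True} p)" by (auto simp: sg_def indicator_def)
  then have "measure_pmf.expectation D (\<lambda>p. sg p v) = 1 - 2 * measure_pmf.prob D {p. p v = True}"
    by (simp only: E_lin_ind)
  then show ?thesis using prob_single[OF v, of True] by simp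
qed

lemma E_sg2: assumes v: "v \<in> bitvecs n" and w: "w \<in> bitvecs n" and vw: "v \<noteq> w"
  shows "measure_pmf.expectation D (\<lambda>p. sg p v * sg p w) = 0"
proof -
  have "(\<lambda>p. sg p v * sg p w) = (\<lambda>p. 1 - 2 * indicator {p. p v \<noteq> p w} p)" by (auto simp: sg_def indicator_def)
  then have e: "measure_pmf.expectation D (\<lambda>p. sg p v * sg p w) = 1 - 2 * measure_pmf.prob D {p. p v \<noteq> p w}"
    by (simp only: E_lin_ind)
  have "{p. p v \<noteq> p w} = {p. p v = True \<and> p w = False} \<union> {p. p v = False \<and> p w = True}" by auto
  then have "measure_pmf.prob D {p. p v \<noteq> p w} = measure_pmf.prob D {p. p v = True \<and> p w = False} + measure_pmf.prob D {p. p v = False \<and> p w = True}"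
    by (simp add: measure_pmf.finite_measure_Union disjoint_iff)
  also have "\<dots> = 1/4 + 1/4"
    using tw'[OF v w vw, of True False] tw'[OF v w vw, of False True] by simp
  finally show ?thesis using e by simp
qed

lemma second_moment:
  assumes fin: "finite A" and inj: "inj_on phi A" and img: "phi ` A \<subseteq> bitvecs n"
  shows "measure_pmf.expectation D (\<lambda>p. (\<Sum>y\<in>A. sg p (phi y) * w y)^2) = (\<Sum>y\<in>A. (w y)^2)"
proof -
  have intg: "integrable (measure_pmf D) (\<lambda>p. sg p (phi y) * w y * (sg p (phi y') * w y'))" for y y'
    by (rule pmf_intb[where B="\<bar>w y\<bar> * \<bar>w y'\<bar>"]) (simp add: abs_mult abs_sg)
  have "measure_pmf.expectation D (\<lambda>p. (\<Sum>y\<in>A. sg p (phi y) * w y)^2)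
      = measure_pmf.expectation D (\<lambda>p. \<Sum>y\<in>A. \<Sum>y'\<in>A. sg p (phi y) * w y * (sg p (phi y') * w y'))"
    by (simp add: power2_eq_square sum_product)
  also have "\<dots> = (\<Sum>y\<in>A. \<Sum>y'\<in>A. measure_pmf.expectation D (\<lambda>p. sg p (phi y) * w y * (sg p (phi y') * w y')))"
    using intg by (simp add: Bochner_Integration.integral_sum integrable_sum)
  also have "\<dots> = (\<Sum>y\<in>A. \<Sum>y'\<in>A. if y = y' then (w y)^2 else 0)"
  proof (intro sum.cong refl)
    fix y y' assume y: "y \<in> A" and y': "y' \<in> A"
    have "(\<lambda>p. sg p (phi y) * w y * (sg p (phi y') * w y')) = (\<lambda>p. (w y * w y') * (sg p (phi y) * sg p (phi y')))"
      by (auto simp: algebra_simps)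
    then have "measure_pmf.expectation D (\<lambda>p. sg p (phi y) * w y * (sg p (phi y') * w y')) = (w y * w y') * measure_pmf.expectation D (\<lambda>p. sg p (phi y) * sg p (phi y'))"
      by simp
    also have "\<dots> = (if y = y' then (w y)^2 else 0)"
    proof (cases "y = y'")
      case True then show ?thesis by (simp add: sg_sq power2_eq_square)
    next
      case False
      then have "phi y \<noteq> phi y'" using inj y y' by (auto simp: inj_on_def)
      then show ?thesis using E_sg2[of "phi y" "phi y'"] img y y' False by auto
    qed
    finally show "measure_pmf.expectation D (\<lambda>p. sg p (phi y) * w y * (sg p (phi y') * w y')) = (if y = y' then (w y)^2 else 0)" .
  qed
  also have "\<dots> = (\<Sum>y\<in>A. (w y)^2)" using fin by (simp add: sum.delta)
  finally show ?thesis .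
qed

end


definition Hs :: "('a, 'b) ring_scheme \<Rightarrow> ('a \<Rightarrow> bool list) \<Rightarrow> (bool list \<Rightarrow> bool) \<Rightarrow> real" where
  "Hs F phi p = (\<Sum>y\<in>carrier F. sg p (phi y))"

definition Gs :: "('a, 'b) ring_scheme \<Rightarrow> nat \<Rightarrow> ('a \<Rightarrow> bool list) \<Rightarrow> 'a \<Rightarrow> (bool list \<Rightarrow> bool) \<Rightarrow> real" where
  "Gs F n phi b p = (\<Sum>y\<in>carrier F. sg p (phi y) * chr F n (b \<otimes>\<^bsub>F\<^esub> y))"

context
  fixes F :: "('a,'b) ring_scheme" and n :: nat and phi
  assumes fwb: "field_with_basis F n phi" and n1: "n \<ge> 1"
begin

interpretation field F by (rule fwb_field[OF fwb])

lemma sum_Zs: "(\<Sum>y\<in>Zs F phi p. g y) = (\<Sum>y\<in>carrier F. (1 + sg p (phi y)) / 2 * g y)"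
proof -
  have "(\<Sum>y\<in>carrier F. (1 + sg p (phi y)) / 2 * g y) = (\<Sum>y\<in>carrier F. if y \<in> Zs F phi p then g y else 0)"
    by (intro sum.cong refl) (auto simp: sg_def Zs_def)
  also have "\<dots> = (\<Sum>y\<in>carrier F \<inter> Zs F phi p. g y)"
    by (simp only: sum.inter_restrict[OF fwb_finite[OF fwb]])
  also have "carrier F \<inter> Zs F phi p = Zs F phi p" using Zs_sub[OF fwb] by blast
  finally show ?thesis by simp
qed

lemma card_Zs_H: "real (card (Zs F phi p)) = (2^n + Hs F phi p) / 2"
proof -
  have "real (card (Zs F phi p)) = (\<Sum>y\<in>Zs F phi p. 1)" by simp
  also have "\<dots> = (\<Sum>y\<in>carrier F. (1 + sg p (phi y)) / 2)" using sum_Zs[where g="\<lambda>_. 1" and p=p] by simp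
  also have "\<dots> = (real (card (carrier F)) + Hs F phi p) / 2"
    by (simp add: Hs_def sum_divide_distrib[symmetric] sum.distrib)
  finally show ?thesis by (simp add: fwb_card[OF fwb])
qed

lemma csum_G: assumes b: "b \<in> carrier F" "b \<noteq> \<zero>\<^bsub>F\<^esub>"
  shows "csum F n phi p b = Gs F n phi b p / 2"
proof -
  have z: "(\<Sum>y\<in>carrier F. chr F n (b \<otimes>\<^bsub>F\<^esub> y)) = 0"
  proof -
    have "(\<Sum>y\<in>carrier F. chr F n (b \<otimes>\<^bsub>F\<^esub> y)) = (\<Sum>y\<in>carrier F. chr F n (y \<otimes>\<^bsub>F\<^esub> b))"
      using b by (intro sum.cong refl) (simp add: m_comm)
    then show ?thesis using chr_sum_mult[OF fwb n1 b(1)] b(2) by simp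
  qed
  have "csum F n phi p b = (\<Sum>y\<in>carrier F. (1 + sg p (phi y)) / 2 * chr F n (b \<otimes>\<^bsub>F\<^esub> y))"
    unfolding csum_def by (rule sum_Zs)
  also have "\<dots> = (\<Sum>y\<in>carrier F. chr F n (b \<otimes>\<^bsub>F\<^esub> y)) / 2 + Gs F n phi b p / 2"
    unfolding Gs_def by (simp add: sum_divide_distrib[symmetric] sum.distrib[symmetric] algebra_simps)
  finally show ?thesis using z by simp
qed

lemma qc_GH: assumes b: "b \<in> carrier F" "b \<noteq> \<zero>\<^bsub>F\<^esub>"
  shows "qc F n phi p b \<le> ((Gs F n phi b p)^2 + 4 * (Hs F phi p)^2) / 4^n"
proof -
  let ?c = "real (card (Zs F phi p))"
  let ?N = "(2::real)^n"
  have N4: "(4::real)^n = ?N * ?N" by (simp add: power_mult_distrib[symmetric])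
  have Npos: "?N > 0" by simp
  show ?thesis
  proof (cases "?c \<ge> ?N / 4")
    case True
    then have cpos: "?c > 0" using Npos by linarith
    have "qc F n phi p b = (Gs F n phi b p)^2 / 4 / (?N * ?c)"
      unfolding qc_def csum_G[OF b] by (simp add: power_divide)
    also have "\<dots> \<le> (Gs F n phi b p)^2 / 4 / (?N * (?N / 4))"
    proof (rule divide_left_mono)
      show "?N * (?N / 4) \<le> ?N * ?c" using True Npos by (intro mult_left_mono) auto
      show "0 < ?N * ?c * (?N * (?N / 4))" using cpos Npos by simp
    qed simp
    also have "\<dots> = (Gs F n phi b p)^2 / 4^n" using N4 by simp
    also have "\<dots> \<le> ((Gs F n phi b p)^2 + 4 * (Hs F phi p)^2) / 4^n"
      by (intro divide_right_mono) auto
    finally show ?thesis .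
  next
    case False
    have H: "Hs F phi p = 2 * ?c - ?N" using card_Zs_H[of p] by simp
    then have "Hs F phi p < - ?N / 2" using False by linarith
    then have "(Hs F phi p)^2 > (?N / 2)^2"
    proof -
      have "(?N / 2)^2 < (- Hs F phi p)^2"
        by (rule power_strict_mono) (use \<open>Hs F phi p < - ?N / 2\<close> Npos in auto)
      then show ?thesis by simp
    qed
    then have "4 * (Hs F phi p)^2 > ?N * ?N" by (simp add: power2_eq_square)
    then have "1 \<le> (4 * (Hs F phi p)^2) / 4^n" using N4 by simp
    also have "\<dots> \<le> ((Gs F n phi b p)^2 + 4 * (Hs F phi p)^2) / 4^n"
      by (intro divide_right_mono) auto
    finally show ?thesis using qc_le1[OF fwb, of p b] by linarith
  qed
qed

lemma qc_sum_le1: "(\<Sum>a\<in>carrier F. qc F n phi p a) \<le> 1"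
  using parseval[OF fwb n1, of p] by simp

lemma f1_bound: assumes x0: "x0 \<ge> 1"
  shows "f1 F n phi x0 p \<le> x0 - (x0 - 1) * (real (card (Zs F phi p)) / 2^n)" and "f1 F n phi x0 p \<ge> 0"
proof -
  have "f1 F n phi x0 p = (\<Sum>a\<in>carrier F. x0 * qc F n phi p a + (if a = \<zero>\<^bsub>F\<^esub> then (1 - x0) * qc F n phi p a else 0))"
    unfolding f1_def by (intro sum.cong refl) (auto simp: algebra_simps)
  also have "\<dots> = x0 * (\<Sum>a\<in>carrier F. qc F n phi p a) + (1 - x0) * qc F n phi p \<zero>\<^bsub>F\<^esub>"
    by (simp add: sum.distrib sum_distrib_left[symmetric] fwb_finite[OF fwb] sum.delta)
  also have "\<dots> \<le> x0 * 1 + (1 - x0) * qc F n phi p \<zero>\<^bsub>F\<^esub>"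
    using qc_sum_le1[of p] x0 by (intro add_right_mono mult_left_mono) auto
  also have "\<dots> = x0 - (x0 - 1) * (real (card (Zs F phi p)) / 2^n)"
  proof -
    have "\<And>z. x0 * 1 + (1 - x0) * z = x0 - (x0 - 1) * z" by (simp add: algebra_simps)
    then show ?thesis by (simp only: qc_zero[OF fwb])
  qed
  finally show "f1 F n phi x0 p \<le> x0 - (x0 - 1) * (real (card (Zs F phi p)) / 2^n)" .
  show "f1 F n phi x0 p \<ge> 0" unfolding f1_def using x0
    by (intro sum_nonneg mult_nonneg_nonneg) (auto simp: qc_nonneg[OF fwb])
qed

lemma f1_le: assumes x0: "x0 \<ge> 1" shows "f1 F n phi x0 p \<le> x0"
proof -
  have "f1 F n phi x0 p \<le> (\<Sum>a\<in>carrier F. qc F n phi p a * x0)"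
    unfolding f1_def using x0 by (intro sum_mono mult_left_mono) (auto simp: qc_nonneg[OF fwb])
  also have "\<dots> = x0 * (\<Sum>a\<in>carrier F. qc F n phi p a)" by (simp add: sum_distrib_left mult.commute)
  also have "\<dots> \<le> x0" using qc_sum_le1[of p] x0 by (simp add: mult_le_cancel_left1)
  finally show ?thesis .
qed

lemma f2_eq: assumes b: "b \<in> carrier F"
  shows "f2 F n phi b p = (\<Sum>a\<in>carrier F. qc F n phi p a) + (2^n - 1) * qc F n phi p b"
proof -
  have "f2 F n phi b p = (\<Sum>a\<in>carrier F. qc F n phi p a + (if a = b then (2^n - 1) * qc F n phi p a else 0))"
    unfolding f2_def by (intro sum.cong refl) (auto simp: algebra_simps)
  also have "\<dots> = (\<Sum>a\<in>carrier F. qc F n phi p a) + (2^n - 1) * qc F n phi p b"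
    using b by (simp add: sum.distrib fwb_finite[OF fwb] sum.delta')
  finally show ?thesis .
qed

lemma f2_nonneg: "f2 F n phi b p \<ge> 0"
  unfolding f2_def by (intro sum_nonneg mult_nonneg_nonneg) (auto simp: qc_nonneg[OF fwb])

lemma f2_le: assumes b: "b \<in> carrier F" shows "f2 F n phi b p \<le> 2^n"
proof -
  have "f2 F n phi b p \<le> 1 + (2^n - 1) * 1"
    unfolding f2_eq[OF b] using qc_sum_le1[of p] qc_le1[OF fwb, of p b]
    by (intro add_mono mult_left_mono) auto
  then show ?thesis by simp
qed

lemma f2_le': assumes b: "b \<in> carrier F" shows "f2 F n phi b p \<le> 1 + (2^n - 1) * qc F n phi p b"
  unfolding f2_eq[OF b] using qc_sum_le1[of p] by simp

end


context
  fixes F :: "('a,'b) ring_scheme" and n :: nat and phi and D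
  assumes fwb: "field_with_basis F n phi" and n1: "n \<ge> 1" and tw: "two_wise_independent n D"
begin

interpretation field F by (rule fwb_field[OF fwb])

lemma phi_img: "phi ` carrier F \<subseteq> bitvecs n" using fwb_bij[OF fwb] by (auto simp: bij_betw_def)
lemma phi_inj: "inj_on phi (carrier F)" using fwb_bij[OF fwb] by (auto simp: bij_betw_def)

lemma abs_Hs: "\<bar>Hs F phi p\<bar> \<le> 2^n"
proof -
  have "\<bar>Hs F phi p\<bar> \<le> (\<Sum>y\<in>carrier F. \<bar>sg p (phi y)\<bar>)" unfolding Hs_def by (rule sum_abs)
  then show ?thesis by (simp add: abs_sg fwb_card[OF fwb])
qed

lemma abs_Gs: "\<bar>Gs F n phi b p\<bar> \<le> 2^n"
proof -
  have "\<bar>Gs F n phi b p\<bar> \<le> (\<Sum>y\<in>carrier F. \<bar>sg p (phi y) * chr F n (b \<otimes>\<^bsub>F\<^esub> y)\<bar>)" unfolding Gs_def by (rule sum_abs)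
  then show ?thesis by (simp add: abs_sg abs_chr abs_mult fwb_card[OF fwb])
qed

lemma E_Hs: "measure_pmf.expectation D (\<lambda>p. Hs F phi p) = 0"
proof -
  have "measure_pmf.expectation D (\<lambda>p. Hs F phi p) = (\<Sum>y\<in>carrier F. measure_pmf.expectation D (\<lambda>p. sg p (phi y)))"
    unfolding Hs_def by (rule Bochner_Integration.integral_sum) (rule pmf_intb[where B=1], simp add: abs_sg)
  also have "\<dots> = 0" using phi_img by (intro sum.neutral) (auto intro!: E_sg[OF tw n1])
  finally show ?thesis .
qed

lemma E_card: "measure_pmf.expectation D (\<lambda>p. real (card (Zs F phi p))) = 2^n / 2"
proof -
  have iH: "integrable (measure_pmf D) (\<lambda>p. Hs F phi p)" by (rule pmf_intb[where B="2^n"]) (rule abs_Hs)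
  have "measure_pmf.expectation D (\<lambda>p. real (card (Zs F phi p))) = measure_pmf.expectation D (\<lambda>p. 2^n / 2 + Hs F phi p / 2)"
    by (simp add: card_Zs_H[OF fwb n1] add_divide_distrib)
  also have "\<dots> = 2^n / 2 + measure_pmf.expectation D (\<lambda>p. Hs F phi p) / 2"
    using iH by (simp add: measure_pmf.prob_space)
  finally show ?thesis by (simp add: E_Hs)
qed

lemma E_Hs2: "measure_pmf.expectation D (\<lambda>p. (Hs F phi p)^2) = 2^n"
proof -
  have "measure_pmf.expectation D (\<lambda>p. (Hs F phi p)^2) = measure_pmf.expectation D (\<lambda>p. (\<Sum>y\<in>carrier F. sg p (phi y) * 1)^2)"
    by (simp add: Hs_def)
  also have "\<dots> = (\<Sum>y\<in>carrier F. 1^2)"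
    by (rule second_moment[OF tw n1 fwb_finite[OF fwb] phi_inj phi_img])
  finally show ?thesis by (simp add: fwb_card[OF fwb])
qed

lemma E_Gs2: "measure_pmf.expectation D (\<lambda>p. (Gs F n phi b p)^2) = 2^n"
proof -
  have "measure_pmf.expectation D (\<lambda>p. (Gs F n phi b p)^2) = (\<Sum>y\<in>carrier F. (chr F n (b \<otimes>\<^bsub>F\<^esub> y))^2)"
    unfolding Gs_def by (rule second_moment[OF tw n1 fwb_finite[OF fwb] phi_inj phi_img])
  also have "\<dots> = (\<Sum>y\<in>carrier F. 1)" by (intro sum.cong refl) (simp add: power2_eq_square chr_sq[OF fwb])
  finally show ?thesis by (simp add: fwb_card[OF fwb])
qed

lemma int_qc: "integrable (measure_pmf D) (\<lambda>p. qc F n phi p b)"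
  by (rule pmf_intb[where B=1]) (simp add: qc_nonneg[OF fwb] qc_le1[OF fwb])

lemma E_qc: assumes b: "b \<in> carrier F" "b \<noteq> \<zero>\<^bsub>F\<^esub>"
  shows "measure_pmf.expectation D (\<lambda>p. qc F n phi p b) \<le> 5 / 2^n"
proof -
  have iG: "integrable (measure_pmf D) (\<lambda>p. (Gs F n phi b p)^2)"
    by (rule pmf_intb[where B="2^n * 2^n"]) (use sq_le_sq[OF abs_Gs] in simp)
  have iH: "integrable (measure_pmf D) (\<lambda>p. (Hs F phi p)^2)"
    by (rule pmf_intb[where B="2^n * 2^n"]) (use sq_le_sq[OF abs_Hs] in simp)
  have "measure_pmf.expectation D (\<lambda>p. qc F n phi p b) \<le> measure_pmf.expectation D (\<lambda>p. ((Gs F n phi b p)^2 + 4 * (Hs F phi p)^2) / 4^n)"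
    by (rule integral_mono[OF int_qc]) (use iG iH qc_GH[OF fwb n1 b] in auto)
  also have "\<dots> = (measure_pmf.expectation D (\<lambda>p. (Gs F n phi b p)^2) + 4 * measure_pmf.expectation D (\<lambda>p. (Hs F phi p)^2)) / 4^n"
    using iG iH by simp
  also have "\<dots> = 5 * 2^n / 4^n" by (simp add: E_Gs2 E_Hs2)
  also have "\<dots> = 5 / 2^n" by (simp add: power_mult_distrib[symmetric] field_simps)
  finally show ?thesis .
qed

lemma int_f1: "x0 \<ge> 1 \<Longrightarrow> integrable (measure_pmf D) (\<lambda>p. f1 F n phi x0 p)"
  by (rule pmf_intb[where B=x0]) (use f1_bound[OF fwb n1] f1_le[OF fwb n1] in \<open>simp add: abs_le_iff\<close>)

lemma int_f2: "b \<in> carrier F \<Longrightarrow> integrable (measure_pmf D) (\<lambda>p. f2 F n phi b p)"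
  by (rule pmf_intb[where B="2^n"]) (use f2_nonneg[OF fwb n1] f2_le[OF fwb n1] in \<open>simp add: abs_le_iff\<close>)

lemma E_f1: assumes x0: "x0 \<ge> 1" shows "measure_pmf.expectation D (\<lambda>p. f1 F n phi x0 p) \<le> (1 + x0) / 2"
proof -
  have ic: "integrable (measure_pmf D) (\<lambda>p. real (card (Zs F phi p)))"
    by (rule pmf_intb[where B="2^n"]) (use card_Zs[OF fwb] in simp)
  have "measure_pmf.expectation D (\<lambda>p. f1 F n phi x0 p) \<le> measure_pmf.expectation D (\<lambda>p. x0 - (x0 - 1) * (real (card (Zs F phi p)) / 2^n))"
    by (rule integral_mono[OF int_f1[OF x0]]) (use ic f1_bound(1)[OF fwb n1 x0] in auto)
  also have "\<dots> = x0 - (x0 - 1) * (measure_pmf.expectation D (\<lambda>p. real (card (Zs F phi p))) / 2^n)"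
    using ic by (simp add: measure_pmf.prob_space)
  also have "\<dots> = (1 + x0) / 2" by (simp add: E_card field_simps)
  finally show ?thesis .
qed

lemma E_f2: assumes b: "b \<in> carrier F"
  shows "measure_pmf.expectation D (\<lambda>p. f2 F n phi b p) \<le> (if b = \<zero>\<^bsub>F\<^esub> then 2^n else 6)"
proof (cases "b = \<zero>\<^bsub>F\<^esub>")
  case True
  have "measure_pmf.expectation D (\<lambda>p. f2 F n phi b p) \<le> measure_pmf.expectation D (\<lambda>p. 2^n)"
    by (rule integral_mono[OF int_f2[OF b]]) (use f2_le[OF fwb n1 b] in auto)
  then show ?thesis using True by (simp add: measure_pmf.prob_space)
next
  case False
  have "measure_pmf.expectation D (\<lambda>p. f2 F n phi b p) \<le> measure_pmf.expectation D (\<lambda>p. 1 + (2^n - 1) * qc F n phi p b)"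
    by (rule integral_mono[OF int_f2[OF b]]) (use f2_le'[OF fwb n1 b] int_qc in auto)
  also have "\<dots> = 1 + (2^n - 1) * measure_pmf.expectation D (\<lambda>p. qc F n phi p b)"
    using int_qc by (simp add: measure_pmf.prob_space)
  also have "\<dots> \<le> 1 + (2^n - 1) * (5 / 2^n)"
    using E_qc[OF b False] by (intro add_left_mono mult_left_mono) auto
  also have "\<dots> \<le> 6" by (simp add: field_simps)
  finally show ?thesis using False by simp
qed

end


lemma E_Qb:
  assumes fwb: "field_with_basis F n phi" and n1: "n \<ge> 1"
    and gam: "gamma \<in> {..<m} \<rightarrow> carrier F" "inj_on gamma {..<m}"
    and tw: "\<And>j. j < m \<Longrightarrow> two_wise_independent n (D j)"
    and x0: "x0 \<ge> 1"
  shows "integrable (measure_pmf (Pi_pmf {..<m} (\<lambda>_. False) D)) (Qb F n phi m gamma \<alpha> \<epsilon> x0)"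
    and "measure_pmf.expectation (Pi_pmf {..<m} (\<lambda>_. False) D) (Qb F n phi m gamma \<alpha> \<epsilon> x0)
       \<le> x0 powr (- ((1/2 + \<epsilon>) * real m)) * ((1 + x0) / 2)^m
          + real (card (RS_code F m gamma ((1 - \<alpha>) * real m))) * ((2::real)^n) powr (- (real m - (1/2 + \<epsilon>) * real m))
            * ((2::real)^n)^(nat \<lceil>(1 - \<alpha>) * real m\<rceil> - 1) * 6^m"
proof -
  let ?M = "measure_pmf (Pi_pmf {..<m} (\<lambda>_. False) D)"
  let ?k = "(1 - \<alpha>) * real m"
  let ?C0 = "RS_code F m gamma ?k - {vzero F m}"
  let ?A = "x0 powr (- ((1/2 + \<epsilon>) * real m))"
  let ?B = "((2::real)^n) powr (- (real m - (1/2 + \<epsilon>) * real m))"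
  have finC: "finite ?C0" using RS_finite[OF fwb gam] by simp
  have cC: "\<And>c j. c \<in> ?C0 \<Longrightarrow> j < m \<Longrightarrow> c j \<in> carrier F"
    using RS_fvecs[OF fwb gam] by (auto simp: fvecs_def)
  have i1: "integrable ?M (\<lambda>P. \<Prod>j<m. f1 F n phi x0 (P j))"
    by (rule integrable_prod_Pi_pmf) (auto intro: int_f1[OF fwb n1 tw x0])
  have i2: "integrable ?M (\<lambda>P. \<Prod>j<m. f2 F n phi (c j) (P j))" if c: "c \<in> ?C0" for c
    by (rule integrable_prod_Pi_pmf) (auto intro: int_f2[OF fwb n1 tw cC[OF c]])
  have eq: "Qb F n phi m gamma \<alpha> \<epsilon> x0 = (\<lambda>P. ?A * (\<Prod>j<m. f1 F n phi x0 (P j)) + (\<Sum>c\<in>?C0. ?B * (\<Prod>j<m. f2 F n phi (c j) (P j))))"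
    by (simp add: Qb_def fun_eq_iff)
  have iA: "integrable ?M (\<lambda>P. ?A * (\<Prod>j<m. f1 F n phi x0 (P j)))"
    using i1 by (rule integrable_mult_right)
  have iB: "integrable ?M (\<lambda>P. ?B * (\<Prod>j<m. f2 F n phi (c j) (P j)))" if c: "c \<in> ?C0" for c
    using i2[OF c] by (rule integrable_mult_right)
  have iS: "integrable ?M (\<lambda>P. \<Sum>c\<in>?C0. ?B * (\<Prod>j<m. f2 F n phi (c j) (P j)))"
    by (rule Bochner_Integration.integrable_sum) (rule iB)
  show "integrable ?M (Qb F n phi m gamma \<alpha> \<epsilon> x0)"
    unfolding eq by (rule Bochner_Integration.integrable_add[OF iA iS])
  have E1: "measure_pmf.expectation (Pi_pmf {..<m} (\<lambda>_. False) D) (\<lambda>P. \<Prod>j<m. f1 F n phi x0 (P j)) \<le> ((1 + x0) / 2)^m"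
  proof -
    have "measure_pmf.expectation (Pi_pmf {..<m} (\<lambda>_. False) D) (\<lambda>P. \<Prod>j<m. f1 F n phi x0 (P j)) = (\<Prod>j<m. measure_pmf.expectation (D j) (\<lambda>p. f1 F n phi x0 p))"
      by (rule expectation_prod_Pi_pmf) (auto intro: int_f1[OF fwb n1 tw x0] f1_bound(2)[OF fwb n1 x0])
    also have "\<dots> \<le> (\<Prod>j<m. (1 + x0) / 2)"
    proof (rule prod_mono)
      fix j assume j: "j \<in> {..<m}"
      have "0 \<le> measure_pmf.expectation (D j) (\<lambda>p. f1 F n phi x0 p)"
        by (rule Bochner_Integration.integral_nonneg) (rule f1_bound(2)[OF fwb n1 x0])
      then show "0 \<le> measure_pmf.expectation (D j) (\<lambda>p. f1 F n phi x0 p) \<and> measure_pmf.expectation (D j) (\<lambda>p. f1 F n phi x0 p) \<le> (1 + x0) / 2"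
        using E_f1[OF fwb n1 tw x0] j by auto
    qed
    finally show ?thesis by simp
  qed
  have E2: "measure_pmf.expectation (Pi_pmf {..<m} (\<lambda>_. False) D) (\<lambda>P. \<Prod>j<m. f2 F n phi (c j) (P j)) \<le> ((2::real)^n)^(nat \<lceil>?k\<rceil> - 1) * 6^m"
    if c: "c \<in> ?C0" for c
  proof -
    have "measure_pmf.expectation (Pi_pmf {..<m} (\<lambda>_. False) D) (\<lambda>P. \<Prod>j<m. f2 F n phi (c j) (P j)) = (\<Prod>j<m. measure_pmf.expectation (D j) (\<lambda>p. f2 F n phi (c j) p))"
      by (rule expectation_prod_Pi_pmf) (auto intro: int_f2[OF fwb n1 tw cC[OF c]] f2_nonneg[OF fwb n1])
    also have "\<dots> \<le> (\<Prod>j<m. if c j = \<zero>\<^bsub>F\<^esub> then (2::real)^n else 6)"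
    proof (rule prod_mono)
      fix j assume j: "j \<in> {..<m}"
      have "0 \<le> measure_pmf.expectation (D j) (\<lambda>p. f2 F n phi (c j) p)"
        by (rule Bochner_Integration.integral_nonneg) (rule f2_nonneg[OF fwb n1])
      then show "0 \<le> measure_pmf.expectation (D j) (\<lambda>p. f2 F n phi (c j) p) \<and> measure_pmf.expectation (D j) (\<lambda>p. f2 F n phi (c j) p) \<le> (if c j = \<zero>\<^bsub>F\<^esub> then (2::real)^n else 6)"
        using E_f2[OF fwb n1 tw cC[OF c]] j by auto
    qed
    also have "\<dots> = ((2::real)^n)^(card {j\<in>{..<m}. c j = \<zero>\<^bsub>F\<^esub>}) * 6^(card {j\<in>{..<m}. \<not> c j = \<zero>\<^bsub>F\<^esub>})"
    proof -
      have "(\<Prod>j<m. if c j = \<zero>\<^bsub>F\<^esub> then (2::real)^n else 6) = (\<Prod>j\<in>{..<m} \<inter> {j. c j = \<zero>\<^bsub>F\<^esub>}. (2::real)^n) * (\<Prod>j\<in>{..<m} \<inter> - {j. c j = \<zero>\<^bsub>F\<^esub>}. 6)"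
        by (rule prod.If_cases) simp
      also have "\<dots> = ((2::real)^n)^(card ({..<m} \<inter> {j. c j = \<zero>\<^bsub>F\<^esub>})) * 6^(card ({..<m} \<inter> - {j. c j = \<zero>\<^bsub>F\<^esub>}))"
        by simp
      also have "{..<m} \<inter> {j. c j = \<zero>\<^bsub>F\<^esub>} = {j\<in>{..<m}. c j = \<zero>\<^bsub>F\<^esub>}" by auto
      also have "{..<m} \<inter> - {j. c j = \<zero>\<^bsub>F\<^esub>} = {j\<in>{..<m}. \<not> c j = \<zero>\<^bsub>F\<^esub>}" by auto
      finally show ?thesis .
    qed
    also have "\<dots> \<le> ((2::real)^n)^(nat \<lceil>?k\<rceil> - 1) * 6^m"
    proof (rule mult_mono)
      have "card {j\<in>{..<m}. c j = \<zero>\<^bsub>F\<^esub>} + 1 \<le> nat \<lceil>?k\<rceil>" using RS_weight[OF fwb gam] c by auto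
      then show "((2::real)^n)^(card {j\<in>{..<m}. c j = \<zero>\<^bsub>F\<^esub>}) \<le> ((2::real)^n)^(nat \<lceil>?k\<rceil> - 1)"
        by (intro power_increasing) auto
      have "card {j\<in>{..<m}. \<not> c j = \<zero>\<^bsub>F\<^esub>} \<le> m" using card_mono[of "{..<m}" "{j\<in>{..<m}. \<not> c j = \<zero>\<^bsub>F\<^esub>}"] by auto
      then show "(6::real)^(card {j\<in>{..<m}. \<not> c j = \<zero>\<^bsub>F\<^esub>}) \<le> 6^m" by (intro power_increasing) auto
    qed auto
    finally show ?thesis .
  qed
  have "measure_pmf.expectation (Pi_pmf {..<m} (\<lambda>_. False) D) (Qb F n phi m gamma \<alpha> \<epsilon> x0)
      = ?A * measure_pmf.expectation (Pi_pmf {..<m} (\<lambda>_. False) D) (\<lambda>P. \<Prod>j<m. f1 F n phi x0 (P j))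
        + (\<Sum>c\<in>?C0. ?B * measure_pmf.expectation (Pi_pmf {..<m} (\<lambda>_. False) D) (\<lambda>P. \<Prod>j<m. f2 F n phi (c j) (P j)))"
  proof -
    have s1: "measure_pmf.expectation (Pi_pmf {..<m} (\<lambda>_. False) D) (\<lambda>P. \<Sum>c\<in>?C0. ?B * (\<Prod>j<m. f2 F n phi (c j) (P j)))
        = (\<Sum>c\<in>?C0. measure_pmf.expectation (Pi_pmf {..<m} (\<lambda>_. False) D) (\<lambda>P. ?B * (\<Prod>j<m. f2 F n phi (c j) (P j))))"
      by (rule Bochner_Integration.integral_sum) (rule iB)
    show ?thesis unfolding eq Bochner_Integration.integral_add[OF iA iS] s1 by simp
  qed
  also have "\<dots> \<le> ?A * ((1 + x0) / 2)^m + (\<Sum>c\<in>?C0. ?B * (((2::real)^n)^(nat \<lceil>?k\<rceil> - 1) * 6^m))"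
    using E1 E2 by (intro add_mono mult_left_mono sum_mono) auto
  also have "(\<Sum>c\<in>?C0. ?B * (((2::real)^n)^(nat \<lceil>?k\<rceil> - 1) * 6^m)) = real (card ?C0) * ?B * ((2::real)^n)^(nat \<lceil>?k\<rceil> - 1) * 6^m"
    by simp
  also have "\<dots> \<le> real (card (RS_code F m gamma ?k)) * ?B * ((2::real)^n)^(nat \<lceil>?k\<rceil> - 1) * 6^m"
    using RS_finite[OF fwb gam] by (intro mult_right_mono) (auto intro: card_mono)
  finally show "measure_pmf.expectation (Pi_pmf {..<m} (\<lambda>_. False) D) (Qb F n phi m gamma \<alpha> \<epsilon> x0)
       \<le> x0 powr (- ((1/2 + \<epsilon>) * real m)) * ((1 + x0) / 2)^m
          + real (card (RS_code F m gamma ((1 - \<alpha>) * real m))) * ((2::real)^n) powr (- (real m - (1/2 + \<epsilon>) * real m))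
            * ((2::real)^n)^(nat \<lceil>(1 - \<alpha>) * real m\<rceil> - 1) * 6^m" by simp
qed


lemma BAD_eq:
  assumes fwb: "field_with_basis F n phi"
    and gam: "gamma \<in> {..<m} \<rightarrow> carrier F" "inj_on gamma {..<m}"
  shows "(\<Sum>(x, e)\<in>BAD F m gamma \<alpha> \<epsilon>. \<bar>Vhat F m gamma \<alpha> x * What F n m phi P e\<bar>^2)
       = (\<Sum>e\<in>bad_errors F m gamma \<alpha> \<epsilon>. \<bar>What F n m phi P e\<bar>^2)"
proof -
  let ?k = "(1 - \<alpha>) * real m"
  let ?C = "RS_code F m gamma ?k"
  let ?B = "bad_errors F m gamma \<alpha> \<epsilon>"
  let ?f = "\<lambda>(x, e). \<bar>Vhat F m gamma \<alpha> x * What F n m phi P e\<bar>^2"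
  have finV: "finite (fvecs F m)" unfolding fvecs_def using fwb_finite[OF fwb] by (auto intro: finite_PiE)
  have finC: "finite ?C" by (rule RS_finite[OF fwb gam])
  have finB: "finite ?B" using finV by (rule finite_subset[rotated]) (auto simp: bad_errors_def)
  have cpos: "card ?C > 0" using finC vzero_RS[OF fwb gam] by (auto simp: card_gt_0_iff)
  have "(\<Sum>z\<in>BAD F m gamma \<alpha> \<epsilon>. ?f z) = (\<Sum>z\<in>(fvecs F m - ?C) \<times> fvecs F m. ?f z) + (\<Sum>z\<in>?C \<times> ?B. ?f z)"
    unfolding BAD_def by (rule sum.union_disjoint) (use finV finC finB in auto)
  also have "(\<Sum>z\<in>(fvecs F m - ?C) \<times> fvecs F m. ?f z) = 0"
    by (rule sum.neutral) (auto simp: Vhat_def)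
  also have "(\<Sum>z\<in>?C \<times> ?B. ?f z) = (\<Sum>x\<in>?C. \<Sum>e\<in>?B. ?f (x, e))"
    by (simp add: sum.cartesian_product)
  also have "\<dots> = (\<Sum>x\<in>?C. (1 / real (card ?C)) * (\<Sum>e\<in>?B. \<bar>What F n m phi P e\<bar>^2))"
  proof (rule sum.cong[OF refl])
    fix x assume x: "x \<in> ?C"
    have "\<And>e. ?f (x, e) = (1 / real (card ?C)) * \<bar>What F n m phi P e\<bar>^2"
      using x cpos by (simp add: Vhat_def power_mult_distrib power_divide)
    then show "(\<Sum>e\<in>?B. ?f (x, e)) = (1 / real (card ?C)) * (\<Sum>e\<in>?B. \<bar>What F n m phi P e\<bar>^2)"
      by (simp add: sum_distrib_left)
  qed
  also have "\<dots> = (\<Sum>e\<in>?B. \<bar>What F n m phi P e\<bar>^2)" using cpos by simp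
  finally show ?thesis by simp
qed

lemma rad_ok:
  assumes eps: "0 < \<epsilon>" "\<epsilon> < 1/6" and alpha: "7/8 + 3/4 * \<epsilon> < \<alpha>" "\<alpha> < 1"
  shows "(1/2 + \<epsilon>) * real m \<le> real m - sqrt ((1 - \<alpha>) * real m * real m)"
proof -
  have "1 - \<alpha> \<le> (1/2 - \<epsilon>)^2"
  proof -
    have "(1/2 - \<epsilon>)^2 = 1/4 - \<epsilon> + \<epsilon>^2" by (simp add: power2_eq_square algebra_simps)
    moreover have "\<epsilon>^2 \<ge> 0" by simp
    ultimately show ?thesis using eps alpha by linarith
  qed
  then have "sqrt (1 - \<alpha>) \<le> sqrt ((1/2 - \<epsilon>)^2)" by (rule real_sqrt_le_mono)
  also have "\<dots> = 1/2 - \<epsilon>" using eps by simp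
  finally have "sqrt (1 - \<alpha>) \<le> 1/2 - \<epsilon>" .
  moreover have "sqrt ((1 - \<alpha>) * real m * real m) = sqrt (1 - \<alpha>) * real m"
    by (simp add: real_sqrt_mult mult.assoc)
  ultimately have "sqrt ((1 - \<alpha>) * real m * real m) \<le> (1/2 - \<epsilon>) * real m"
    by (simp add: mult_right_mono)
  then show ?thesis by (simp add: algebra_simps)
qed

definition rho :: "real \<Rightarrow> real" where
  "rho \<epsilon> = ((1 + (1 + 2 * \<epsilon>)^2) / 2) / ((1 + 2 * \<epsilon>)^2) powr (1/2 + \<epsilon>)"

lemma rho_lt1: assumes eps: "0 < \<epsilon>" shows "rho \<epsilon> < 1" and "rho \<epsilon> > 0"
proof -
  define z where "z = 1 + 2 * \<epsilon>"
  have z1: "z > 1" using eps by (simp add: z_def)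
  have p: "(z^2) powr (1/2 + \<epsilon>) = z * z powr (2 * \<epsilon>)"
  proof -
    have "(z^2) powr (1/2 + \<epsilon>) = (z powr 2) powr (1/2 + \<epsilon>)" using z1 by (simp add: powr_realpow)
    also have "\<dots> = z powr (1 + 2 * \<epsilon>)" by (simp add: powr_powr algebra_simps)
    also have "\<dots> = z * z powr (2 * \<epsilon>)" using z1 by (simp add: powr_add)
    finally show ?thesis .
  qed
  have lnz: "ln z \<ge> 1 - 1 / z"
  proof -
    have "ln (1 / z) \<le> 1 / z - 1" using z1 by (intro ln_le_minus_one) auto
    then show ?thesis using z1 by (simp add: ln_div)
  qed
  have "z powr (2 * \<epsilon>) = exp (2 * \<epsilon> * ln z)" using z1 by (simp add: powr_def mult.commute)
  also have "\<dots> \<ge> 1 + 2 * \<epsilon> * ln z" by (rule exp_ge_add_one_self)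
  finally have "z powr (2 * \<epsilon>) \<ge> 1 + 2 * \<epsilon> * ln z" .
  moreover have "2 * \<epsilon> * (1 - 1 / z) \<le> 2 * \<epsilon> * ln z" using lnz eps by (intro mult_left_mono) auto
  ultimately have "z powr (2 * \<epsilon>) \<ge> 1 + 2 * \<epsilon> * (1 - 1 / z)" by linarith
  then have "z * z powr (2 * \<epsilon>) \<ge> z * (1 + 2 * \<epsilon> * (1 - 1 / z))" using z1 by (intro mult_left_mono) auto
  also have "z * (1 + 2 * \<epsilon> * (1 - 1 / z)) = z + 4 * \<epsilon>^2" using z1 by (simp add: z_def field_simps power2_eq_square)
  finally have den: "(z^2) powr (1/2 + \<epsilon>) \<ge> z + 4 * \<epsilon>^2" using p by simp
  have num: "(1 + z^2) / 2 = z + 2 * \<epsilon>^2" by (simp add: z_def power2_eq_square field_simps)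
  have e2: "\<epsilon>^2 > 0" using eps by simp
  have "rho \<epsilon> = (z + 2 * \<epsilon>^2) / (z^2) powr (1/2 + \<epsilon>)" unfolding rho_def z_def[symmetric] num ..
  moreover have "(z + 2 * \<epsilon>^2) < (z^2) powr (1/2 + \<epsilon>)" using den e2 by linarith
  moreover have "(z^2) powr (1/2 + \<epsilon>) > 0" using z1 by simp
  moreover have "z + 2 * \<epsilon>^2 > 0" using z1 e2 by linarith
  ultimately show "rho \<epsilon> < 1" "rho \<epsilon> > 0" by (auto simp: divide_less_eq_1)
qed


definition tau :: "real \<Rightarrow> real" where "tau \<epsilon> = sqrt (max (rho \<epsilon>) (1/2))"

lemma tau_bounds: assumes "0 < \<epsilon>" shows "0 < tau \<epsilon>" "tau \<epsilon> < 1"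
  using rho_lt1[OF assms] by (auto simp: tau_def max_def)

lemma tau_sq: assumes "0 < \<epsilon>" shows "(tau \<epsilon>)^2 = max (rho \<epsilon>) (1/2)"
  using rho_lt1[OF assms] by (simp add: tau_def max_def)

lemma term1: assumes eps: "0 < \<epsilon>"
  shows "((1 + 2 * \<epsilon>)^2) powr (- ((1/2 + \<epsilon>) * real m)) * ((1 + (1 + 2 * \<epsilon>)^2) / 2)^m = (rho \<epsilon>)^m"
proof -
  let ?x = "(1 + 2 * \<epsilon>)^2"
  have xpos: "?x > 0" using eps by simp
  have "(?x powr (- (1/2 + \<epsilon>)))^m = ?x powr (real m * (- (1/2 + \<epsilon>)))"
    using xpos by (simp add: powr_power)
  moreover have "real m * (- (1/2 + \<epsilon>)) = - ((1/2 + \<epsilon>) * real m)" by (simp add: algebra_simps)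
  ultimately have "?x powr (- ((1/2 + \<epsilon>) * real m)) = (?x powr (- (1/2 + \<epsilon>)))^m" by simp
  moreover have "?x powr (- (1/2 + \<epsilon>)) * ((1 + ?x) / 2) = rho \<epsilon>"
    by (subst powr_minus_divide) (simp add: rho_def)
  ultimately show ?thesis by (metis power_mult_distrib)
qed

lemma term2:
  assumes eps: "0 < \<epsilon>" and alpha: "7/8 + 3/4 * \<epsilon> < \<alpha>" "\<alpha> < 1"
    and n32: "n \<ge> 32" and m8: "m \<ge> 8"
    and cardC: "cC \<le> ((2::real)^n)^(nat \<lceil>(1 - \<alpha>) * real m\<rceil>)" and cC0: "cC \<ge> 0"
  shows "cC * ((2::real)^n) powr (- (real m - (1/2 + \<epsilon>) * real m)) * ((2::real)^n)^(nat \<lceil>(1 - \<alpha>) * real m\<rceil> - 1) * 6^m \<le> (1/2)^m"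
proof -
  let ?k = "(1 - \<alpha>) * real m"
  let ?d = "nat \<lceil>?k\<rceil>"
  let ?t = "(1/2 + \<epsilon>) * real m"
  have kpos: "?k > 0" using alpha m8 by simp
  have d1: "?d \<ge> 1" using kpos by linarith
  have dk: "real ?d \<le> ?k + 1" using kpos by linarith
  have p1: "((2::real)^n)^?d = 2 powr (real n * real ?d)"
    by (simp add: powr_realpow[symmetric] powr_powr power_mult[symmetric] mult.commute)
  have p2: "((2::real)^n)^(?d - 1) = 2 powr (real n * (real ?d - 1))"
    using d1 by (simp add: powr_realpow[symmetric] powr_powr of_nat_diff)
  have p3: "((2::real)^n) powr (- (real m - ?t)) = 2 powr (real n * (- (real m - ?t)))"
    by (simp add: powr_realpow[symmetric] powr_powr)
  have "cC * ((2::real)^n) powr (- (real m - ?t)) * ((2::real)^n)^(?d - 1) * 6^m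
      \<le> ((2::real)^n)^?d * ((2::real)^n) powr (- (real m - ?t)) * ((2::real)^n)^(?d - 1) * 6^m"
    using cardC by (intro mult_right_mono) auto
  also have "\<dots> = 2 powr (real n * (2 * real ?d - 1 - real m + ?t)) * 6^m"
    unfolding p1 p2 p3 by (simp add: powr_add[symmetric] algebra_simps)
  also have "\<dots> \<le> 2 powr (real m * (- (real n / 8))) * 6^m"
  proof -
    have "2 * real ?d - 1 - real m + ?t \<le> 1 + real m * (2 * (1 - \<alpha>) - 1 + (1/2 + \<epsilon>))"
      using dk by (simp add: algebra_simps)
    also have "\<dots> \<le> 1 - real m / 4"
    proof -
      have "2 * (1 - \<alpha>) - 1 + (1/2 + \<epsilon>) \<le> - 1/4" using alpha eps by argo
      then have "real m * (2 * (1 - \<alpha>) - 1 + (1/2 + \<epsilon>)) \<le> real m * (- 1/4)" by (intro mult_left_mono) auto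
      then show ?thesis by simp
    qed
    also have "\<dots> \<le> - (real m / 8)" using m8 by simp
    finally have "real n * (2 * real ?d - 1 - real m + ?t) \<le> real n * (- (real m / 8))" by (intro mult_left_mono) auto
    also have "real n * (- (real m / 8)) = real m * (- (real n / 8))" by (simp add: mult.commute)
    finally show ?thesis by (intro mult_right_mono) auto
  qed
  also have "\<dots> = (2 powr (- (real n / 8)) * 6)^m"
  proof -
    have h: "(2 powr (- (real n / 8)))^m = (2::real) powr (real m * (- (real n / 8)))" by (simp add: powr_power)
    show ?thesis by (simp only: power_mult_distrib h)
  qed
  also have "\<dots> \<le> (1/2)^m"
  proof (rule power_mono)
    have "2 powr (- (real n / 8)) \<le> 2 powr (-4)" using n32 by (intro powr_mono) auto
    also have "(2::real) powr (-4) = 1/16" by (simp add: powr_minus_divide powr_numeral)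
    finally show "2 powr (- (real n / 8)) * 6 \<le> 1/2" by simp
  qed simp
  finally show ?thesis .
qed

lemma Qb_nonneg:
  assumes fwb: "field_with_basis F n phi" and n1: "n \<ge> 1" and x0: "x0 \<ge> 1"
  shows "Qb F n phi m gamma \<alpha> \<epsilon> x0 P \<ge> 0"
  unfolding Qb_def using x0
  by (intro add_nonneg_nonneg mult_nonneg_nonneg prod_nonneg sum_nonneg)
     (auto intro: f1_bound(2)[OF fwb n1 x0] f2_nonneg[OF fwb n1])

lemma level:
  assumes fwb: "field_with_basis F n phi" and n32: "n \<ge> 32" and m8: "m \<ge> 8"
    and gam: "gamma \<in> {..<m} \<rightarrow> carrier F" "inj_on gamma {..<m}"
    and tw: "\<And>j. j < m \<Longrightarrow> two_wise_independent n (D j)"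
    and eps: "0 < \<epsilon>" "\<epsilon> < 1/6" and alpha: "7/8 + 3/4 * \<epsilon> < \<alpha>" "\<alpha> < 1"
  shows "measure_pmf.prob (Pi_pmf {..<m} (\<lambda>_. False) D)
         {P. (\<Sum>(x, e)\<in>BAD F m gamma \<alpha> \<epsilon>. \<bar>Vhat F m gamma \<alpha> x * What F n m phi P e\<bar>^2)
              = (\<Sum>e\<in>bad_errors F m gamma \<alpha> \<epsilon>. \<bar>What F n m phi P e\<bar>^2)
           \<and> (\<Sum>e\<in>bad_errors F m gamma \<alpha> \<epsilon>. \<bar>What F n m phi P e\<bar>^2) \<le> 2 * (tau \<epsilon>)^m}
       \<ge> 1 - (tau \<epsilon>)^m"
proof -
  let ?M = "measure_pmf (Pi_pmf {..<m} (\<lambda>_. False) D)"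
  let ?x0 = "(1 + 2 * \<epsilon>)^2"
  let ?Q = "Qb F n phi m gamma \<alpha> \<epsilon> ?x0"
  let ?S = "\<lambda>P. (\<Sum>e\<in>bad_errors F m gamma \<alpha> \<epsilon>. \<bar>What F n m phi P e\<bar>^2)"
  let ?c = "2 * (tau \<epsilon>)^m"
  have n1: "n \<ge> 1" using n32 by simp
  have x0: "?x0 \<ge> 1" using eps by (simp add: one_le_power)
  have x0': "?x0 > 1" using eps by (simp add: one_less_power)
  have rad: "(1/2 + \<epsilon>) * real m \<le> real m - sqrt ((1 - \<alpha>) * real m * real m)" by (rule rad_ok[OF eps alpha])
  have intQ: "integrable ?M ?Q" by (rule E_Qb(1)[OF fwb n1 gam tw x0])
  have EQ: "measure_pmf.expectation (Pi_pmf {..<m} (\<lambda>_. False) D) ?Q \<le> 2 * (tau \<epsilon>)^(2*m)"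
  proof -
    have cC: "real (card (RS_code F m gamma ((1 - \<alpha>) * real m))) \<le> ((2::real)^n)^(nat \<lceil>(1 - \<alpha>) * real m\<rceil>)"
      using RS_card[OF fwb gam, where k="(1 - \<alpha>) * real m"] by (metis of_nat_le_iff of_nat_numeral of_nat_power)
    have "measure_pmf.expectation (Pi_pmf {..<m} (\<lambda>_. False) D) ?Q \<le> (rho \<epsilon>)^m + (1/2)^m"
      using E_Qb(2)[where D=D and \<alpha>=\<alpha> and \<epsilon>=\<epsilon>, OF fwb n1 gam tw x0] term1[OF eps(1), of m] term2[OF eps(1) alpha n32 m8 cC] by simp
    also have "\<dots> \<le> (max (rho \<epsilon>) (1/2))^m + (max (rho \<epsilon>) (1/2))^m"
      using rho_lt1[OF eps(1)] by (intro add_mono power_mono) auto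
    also have "\<dots> = 2 * (tau \<epsilon>)^(2*m)" by (simp add: power_mult tau_sq[OF eps(1)])
    finally show ?thesis .
  qed
  have cpos: "?c > 0" using tau_bounds[OF eps(1)] by simp
  have markov: "measure ?M {P \<in> space ?M. ?Q P \<ge> ?c} \<le> measure_pmf.expectation (Pi_pmf {..<m} (\<lambda>_. False) D) ?Q / ?c"
    by (rule integral_Markov_inequality_measure[OF intQ, where A=UNIV]) (simp_all add: Qb_nonneg[OF fwb n1 x0] cpos)
  also have "\<dots> \<le> 2 * (tau \<epsilon>)^(2*m) / ?c" using EQ cpos by (intro divide_right_mono) auto
  also have "\<dots> = (tau \<epsilon>)^m"
  proof -
    have "tau \<epsilon> ^ (2*m) = tau \<epsilon> ^ m * tau \<epsilon> ^ m" by (simp only: mult_2 power_add)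
    moreover have "tau \<epsilon> ^ m > 0" using tau_bounds(1)[OF eps(1)] by simp
    ultimately show ?thesis by simp
  qed
  finally have mk: "measure_pmf.prob (Pi_pmf {..<m} (\<lambda>_. False) D) {P. ?Q P \<ge> ?c} \<le> (tau \<epsilon>)^m" by simp
  have sub: "{P. ?Q P < ?c} \<subseteq> {P. (\<Sum>(x, e)\<in>BAD F m gamma \<alpha> \<epsilon>. \<bar>Vhat F m gamma \<alpha> x * What F n m phi P e\<bar>^2) = ?S P \<and> ?S P \<le> ?c}"
  proof
    fix P assume "P \<in> {P. ?Q P < ?c}"
    then have "?Q P < ?c" by simp
    moreover have "?S P \<le> ?Q P" by (rule pointwise_bound[OF fwb gam rad x0'])
    ultimately show "P \<in> {P. (\<Sum>(x, e)\<in>BAD F m gamma \<alpha> \<epsilon>. \<bar>Vhat F m gamma \<alpha> x * What F n m phi P e\<bar>^2) = ?S P \<and> ?S P \<le> ?c}"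
      using BAD_eq[OF fwb gam] by simp
  qed
  have "measure_pmf.prob (Pi_pmf {..<m} (\<lambda>_. False) D) {P. ?Q P < ?c} = 1 - measure_pmf.prob (Pi_pmf {..<m} (\<lambda>_. False) D) {P. ?Q P \<ge> ?c}"
  proof -
    have "{P. ?Q P < ?c} = UNIV - {P. ?Q P \<ge> ?c}" by auto
    moreover have "measure_pmf.prob (Pi_pmf {..<m} (\<lambda>_. False) D) (space (measure_pmf (Pi_pmf {..<m} (\<lambda>_. False) D)) - {P. ?Q P \<ge> ?c}) = 1 - measure_pmf.prob (Pi_pmf {..<m} (\<lambda>_. False) D) {P. ?Q P \<ge> ?c}"
      by (rule measure_pmf.prob_compl) simp
    ultimately show ?thesis by simp
  qed
  then have "measure_pmf.prob (Pi_pmf {..<m} (\<lambda>_. False) D) {P. ?Q P < ?c} \<ge> 1 - (tau \<epsilon>)^m" using mk by simp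
  also have "\<dots> \<le> measure_pmf.prob (Pi_pmf {..<m} (\<lambda>_. False) D) {P. (\<Sum>(x, e)\<in>BAD F m gamma \<alpha> \<epsilon>. \<bar>Vhat F m gamma \<alpha> x * What F n m phi P e\<bar>^2) = ?S P \<and> ?S P \<le> ?c}"
    by (rule measure_pmf.finite_measure_mono[OF sub]) simp
  finally show ?thesis .
qed


lemma n_lower:
  assumes "(\<lambda>l. real (n l)) \<in> \<Theta>(\<lambda>l. real l)"
  shows "\<exists>c0>0. eventually (\<lambda>l. real (n l) \<ge> c0 * real l) sequentially"
proof -
  have "(\<lambda>l. real (n l)) \<in> \<Omega>(\<lambda>l. real l)" using assms by (rule bigthetaD2)
  then obtain c where c: "c > 0" "eventually (\<lambda>l. norm (real (n l)) \<ge> c * norm (real l)) sequentially"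
    by (elim landau_omega.bigE) auto
  then show ?thesis by auto
qed

lemma ev_real_ge: "eventually (\<lambda>l::nat. real l \<ge> r) sequentially"
proof -
  obtain N where N: "r \<le> real N" using real_arch_simple by blast
  show ?thesis by (rule eventually_mono[OF eventually_ge_at_top[of N]]) (use N in auto)
qed

lemma n_large:
  assumes "c0 > 0" "eventually (\<lambda>l. real (n l) \<ge> c0 * real l) sequentially"
  shows "eventually (\<lambda>l. n l \<ge> N) sequentially"
proof -
  have "eventually (\<lambda>l. real l \<ge> real N / c0) sequentially"
    by (rule ev_real_ge)
  then show ?thesis using assms(2)
  proof eventually_elim
    case (elim l)
    then have "c0 * real l \<ge> real N" using assms(1) by (simp add: field_simps)
    then show ?case using elim by linarith
  qed
qed


lemma m_lower:
  assumes "(\<lambda>l. real (m l)) \<in> \<omega>(\<lambda>l. ln (real (n l)))"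
    and "eventually (\<lambda>l. n l \<ge> 1) sequentially"
  shows "eventually (\<lambda>l. real (m l) \<ge> K * ln (real (n l))) sequentially"
proof -
  have "eventually (\<lambda>l. norm (real (m l)) \<ge> K * norm (ln (real (n l)))) sequentially"
    using assms(1) by (rule smallomegaD)
  then show ?thesis using assms(2) by eventually_elim auto
qed

lemma pow_bound:
  assumes t: "0 < t" "t < (1::real)" and N: "N \<ge> 1"
    and mK: "real m \<ge> (real c + 1) / (- ln t) * ln (real N)"
  shows "t^m \<le> inverse (real N ^ (c + 1))"
proof -
  have lt: "ln t < 0" using t by simp
  have "t^m = exp (real m * ln t)" using t by (simp add: exp_of_nat_mult)
  also have "real m * ln t \<le> (real c + 1) / (- ln t) * ln (real N) * ln t"
    using mK lt by (intro mult_right_mono_neg) auto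
  also have "(real c + 1) / (- ln t) * ln (real N) * ln t = - (real (c + 1) * ln (real N))"
    using lt by (simp add: field_simps)
  finally have "t^m \<le> exp (- (real (c + 1) * ln (real N)))" by simp
  also have "\<dots> = inverse (exp (ln (real N)) ^ (c + 1))" by (simp only: exp_minus exp_of_nat_mult)
  also have "\<dots> = inverse (real N ^ (c + 1))" using N by simp
  finally show ?thesis .
qed

lemma nu_negl:
  assumes t: "0 < t" "t < (1::real)"
    and nge: "eventually (\<lambda>l. n l \<ge> 1) sequentially"
    and mK: "\<And>K. eventually (\<lambda>l. real (m l) \<ge> K * ln (real (n l))) sequentially"
  shows "negligible_fun (\<lambda>N. Sup (insert 0 ((\<lambda>l. t^(m l)) ` {l. n l = N})))"
  unfolding negligible_fun_def
proof
  fix c :: nat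
  let ?nu = "\<lambda>N. Sup (insert 0 ((\<lambda>l. t^(m l)) ` {l. n l = N}))"
  have "eventually (\<lambda>l. real (m l) \<ge> (real c + 1) / (- ln t) * ln (real (n l)) \<and> n l \<ge> 1) sequentially"
    using mK nge by (rule eventually_conj)
  then obtain L where L: "\<And>l. l \<ge> L \<Longrightarrow> real (m l) \<ge> (real c + 1) / (- ln t) * ln (real (n l)) \<and> n l \<ge> 1"
    by (auto simp: eventually_sequentially)
  define N0 where "N0 = Max (insert 0 (n ` {..<L})) + 2"
  have bdd: "bdd_above (insert 0 ((\<lambda>l. t^(m l)) ` A))" for A
    by (rule bdd_aboveI[where M=1]) (use t in \<open>auto intro: power_le_one\<close>)
  have "\<forall>N\<ge>N0. \<bar>?nu N\<bar> < inverse (real N ^ c)"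
  proof (intro allI impI)
    fix N assume N: "N \<ge> N0"
    have N2: "N \<ge> 2" using N by (simp add: N0_def)
    have ge: "\<And>l. n l = N \<Longrightarrow> l \<ge> L"
    proof (rule ccontr)
      fix l assume nl: "n l = N" and "\<not> L \<le> l"
      then have "l \<in> {..<L}" by simp
      then have "n l \<le> Max (insert 0 (n ` {..<L}))" by (intro Max_ge) auto
      then show False using nl N by (simp add: N0_def)
    qed
    have up: "?nu N \<le> inverse (real N ^ (c + 1))"
    proof (rule cSup_least)
      show "insert 0 ((\<lambda>l. t^(m l)) ` {l. n l = N}) \<noteq> {}" by simp
      fix x assume "x \<in> insert 0 ((\<lambda>l. t^(m l)) ` {l. n l = N})"
      then consider "x = 0" | l where "n l = N" "x = t^(m l)" by auto
      then show "x \<le> inverse (real N ^ (c + 1))"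
      proof cases
        case 1 then show ?thesis by simp
      next
        case (2 l)
        have "l \<ge> L" using ge 2(1) by simp
        then show ?thesis using pow_bound[OF t, where N="n l" and m="m l" and c=c] L 2 by auto
      qed
    qed
    have lo: "?nu N \<ge> 0" by (rule cSup_upper[OF _ bdd]) simp
    have "inverse (real N ^ (c + 1)) < inverse (real N ^ c)"
      using N2 by (intro less_imp_inverse_less) (auto intro: power_strict_increasing)
    then show "\<bar>?nu N\<bar> < inverse (real N ^ c)" using up lo by simp
  qed
  then show "\<forall>\<^sub>F N in sequentially. \<bar>?nu N\<bar> < inverse (real N ^ c)"
    by (auto simp: eventually_sequentially)
qed

lemma mu_negl:
  assumes nu: "negligible_fun nu" and c0: "c0 > 0" "eventually (\<lambda>l. real (n l) \<ge> c0 * real l) sequentially"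
  shows "negligible_fun (\<lambda>l. 2 * nu (n l))"
  unfolding negligible_fun_def
proof
  fix c :: nat
  obtain N1 where N1: "\<And>N. N \<ge> N1 \<Longrightarrow> \<bar>nu N\<bar> < inverse (real N ^ (c + 1))"
    using nu unfolding negligible_fun_def eventually_sequentially by blast
  have "eventually (\<lambda>l. n l \<ge> N1 \<and> real (n l) \<ge> c0 * real l \<and> real l \<ge> 2 / c0^(c+1) \<and> real l \<ge> 1) sequentially"
    using n_large[OF c0, of N1] c0(2) ev_real_ge ev_real_ge by (intro eventually_conj) auto
  then show "\<forall>\<^sub>F l in sequentially. \<bar>2 * nu (n l)\<bar> < inverse (real l ^ c)"
  proof eventually_elim
    case (elim l)
    have lpos: "real l > 0" using elim by linarith
    have clpos: "c0 * real l > 0" using lpos c0 by simp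
    have "\<bar>2 * nu (n l)\<bar> < 2 * inverse (real (n l) ^ (c + 1))" using N1[of "n l"] elim by simp
    also have "\<dots> \<le> 2 * inverse ((c0 * real l) ^ (c + 1))"
      using elim clpos by (intro mult_left_mono le_imp_inverse_le power_mono) auto
    also have "\<dots> = 2 / (c0^(c+1) * real l) * inverse (real l ^ c)"
      using lpos c0 by (simp add: power_mult_distrib field_simps)
    also have "\<dots> \<le> 1 * inverse (real l ^ c)"
    proof (rule mult_right_mono)
      have "2 \<le> c0^(c+1) * real l" using elim c0 by (simp add: field_simps)
      then show "2 / (c0^(c+1) * real l) \<le> 1" using lpos c0 by simp
    qed (use lpos in simp)
    finally show ?case by simp
  qed
qed


theorem mainTheorem2:
  fixes n m :: "nat \<Rightarrow> nat"
    and F :: "nat \<Rightarrow> ('a, 'b) ring_scheme"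
    and phi :: "nat \<Rightarrow> 'a \<Rightarrow> bool list"
    and gamma :: "nat \<Rightarrow> nat \<Rightarrow> 'a"
    and D :: "nat \<Rightarrow> nat \<Rightarrow> (bool list \<Rightarrow> bool) pmf"
    and \<epsilon> \<alpha> :: real
  assumes n_Theta: "(\<lambda>l. real (n l)) \<in> \<Theta>(\<lambda>l. real l)"
    and m_omega: "(\<lambda>l. real (m l)) \<in> \<omega>(\<lambda>l. ln (real (n l)))"
    and field: "\<forall>\<^sub>F l in sequentially. field_with_basis (F l) (n l) (phi l)"
    and points: "\<forall>\<^sub>F l in sequentially.
                   gamma l \<in> {..<m l} \<rightarrow> carrier (F l) \<and> inj_on (gamma l) {..<m l}"
    and distr: "\<forall>\<^sub>F l in sequentially. \<forall>i<m l.
                   shift_invariant (n l) (D l i) \<and> two_wise_independent (n l) (D l i)"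
    and eps: "0 < \<epsilon>" "\<epsilon> < 1/6"
    and alpha: "7/8 + 3/4 * \<epsilon> < \<alpha>" "\<alpha> < 1"
  shows "\<exists>\<mu> \<nu>. negligible_fun \<mu> \<and> negligible_fun \<nu> \<and>
    (\<forall>\<^sub>F l in sequentially.
       measure_pmf.prob (Pi_pmf {..<m l} (\<lambda>_. False) (D l))
         {P. (\<Sum>(x, e)\<in>BAD (F l) (m l) (gamma l) \<alpha> \<epsilon>.
                 \<bar>Vhat (F l) (m l) (gamma l) \<alpha> x * What (F l) (n l) (m l) (phi l) P e\<bar>\<^sup>2)
              = (\<Sum>e\<in>bad_errors (F l) (m l) (gamma l) \<alpha> \<epsilon>.
                   \<bar>What (F l) (n l) (m l) (phi l) P e\<bar>\<^sup>2)
           \<and> (\<Sum>e\<in>bad_errors (F l) (m l) (gamma l) \<alpha> \<epsilon>.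
                   \<bar>What (F l) (n l) (m l) (phi l) P e\<bar>\<^sup>2) \<le> \<mu> l}
       \<ge> 1 - \<nu> (n l))"
proof -
  define t where "t = tau \<epsilon>"
  have t: "0 < t" "t < 1" using tau_bounds[OF eps(1)] by (auto simp: t_def)
  obtain c0 where c0: "c0 > 0" "eventually (\<lambda>l. real (n l) \<ge> c0 * real l) sequentially"
    using n_lower[OF n_Theta] by blast
  have nge: "\<And>N. eventually (\<lambda>l. n l \<ge> N) sequentially" by (rule n_large[OF c0])
  have mK: "\<And>K. eventually (\<lambda>l. real (m l) \<ge> K * ln (real (n l))) sequentially"
    by (rule m_lower[OF m_omega nge])
  define nu where "nu = (\<lambda>N. Sup (insert 0 ((\<lambda>l. t^(m l)) ` {l. n l = N})))"
  have negnu: "negligible_fun nu" unfolding nu_def by (rule nu_negl[OF t nge mK])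
  define mu where "mu = (\<lambda>l. 2 * nu (n l))"
  have negmu: "negligible_fun mu" unfolding mu_def by (rule mu_negl[OF negnu c0])
  have bdd: "bdd_above (insert 0 ((\<lambda>l. t^(m l)) ` A))" for A
    by (rule bdd_aboveI[where M=1]) (use t in \<open>auto intro: power_le_one\<close>)
  have tle: "t^(m l) \<le> nu (n l)" for l
    unfolding nu_def by (rule cSup_upper[OF _ bdd]) auto
  have m8: "eventually (\<lambda>l. m l \<ge> 8) sequentially"
    using mK[of "8 / ln 2"] nge[of 2]
  proof eventually_elim
    case (elim l)
    have "ln (real (n l)) \<ge> ln 2" using elim by simp
    then have "8 / ln 2 * ln (real (n l)) \<ge> 8 / ln 2 * ln 2" by (intro mult_left_mono) auto
    then have "real (m l) \<ge> 8" using elim by simp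
    then show ?case by simp
  qed
  have ev: "\<forall>\<^sub>F l in sequentially. field_with_basis (F l) (n l) (phi l) \<and>
      (gamma l \<in> {..<m l} \<rightarrow> carrier (F l) \<and> inj_on (gamma l) {..<m l}) \<and>
      (\<forall>i<m l. shift_invariant (n l) (D l i) \<and> two_wise_independent (n l) (D l i)) \<and> n l \<ge> 32 \<and> m l \<ge> 8"
    using field points distr nge[of 32] m8 by eventually_elim auto
  show ?thesis
  proof (intro exI conjI)
    show "negligible_fun mu" by (rule negmu)
    show "negligible_fun nu" by (rule negnu)
    show "\<forall>\<^sub>F l in sequentially.
       measure_pmf.prob (Pi_pmf {..<m l} (\<lambda>_. False) (D l))
         {P. (\<Sum>(x, e)\<in>BAD (F l) (m l) (gamma l) \<alpha> \<epsilon>.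
                 \<bar>Vhat (F l) (m l) (gamma l) \<alpha> x * What (F l) (n l) (m l) (phi l) P e\<bar>\<^sup>2)
              = (\<Sum>e\<in>bad_errors (F l) (m l) (gamma l) \<alpha> \<epsilon>.
                   \<bar>What (F l) (n l) (m l) (phi l) P e\<bar>\<^sup>2)
           \<and> (\<Sum>e\<in>bad_errors (F l) (m l) (gamma l) \<alpha> \<epsilon>.
                   \<bar>What (F l) (n l) (m l) (phi l) P e\<bar>\<^sup>2) \<le> mu l}
       \<ge> 1 - nu (n l)"
      using ev
    proof eventually_elim
      case (elim l)
      have fwb: "field_with_basis (F l) (n l) (phi l)" using elim by simp
      have gam: "gamma l \<in> {..<m l} \<rightarrow> carrier (F l)" "inj_on (gamma l) {..<m l}" using elim by auto
      have tw: "\<And>j. j < m l \<Longrightarrow> two_wise_independent (n l) (D l j)" using elim by auto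
      have n32: "n l \<ge> 32" and m8: "m l \<ge> 8" using elim by auto
      have lev: "measure_pmf.prob (Pi_pmf {..<m l} (\<lambda>_. False) (D l))
         {P. (\<Sum>(x, e)\<in>BAD (F l) (m l) (gamma l) \<alpha> \<epsilon>. \<bar>Vhat (F l) (m l) (gamma l) \<alpha> x * What (F l) (n l) (m l) (phi l) P e\<bar>^2)
              = (\<Sum>e\<in>bad_errors (F l) (m l) (gamma l) \<alpha> \<epsilon>. \<bar>What (F l) (n l) (m l) (phi l) P e\<bar>^2)
           \<and> (\<Sum>e\<in>bad_errors (F l) (m l) (gamma l) \<alpha> \<epsilon>. \<bar>What (F l) (n l) (m l) (phi l) P e\<bar>^2) \<le> 2 * t^(m l)}
       \<ge> 1 - t^(m l)"
        unfolding t_def by (rule level[OF fwb n32 m8 gam tw eps alpha])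
      have sub: "{P. (\<Sum>(x, e)\<in>BAD (F l) (m l) (gamma l) \<alpha> \<epsilon>. \<bar>Vhat (F l) (m l) (gamma l) \<alpha> x * What (F l) (n l) (m l) (phi l) P e\<bar>^2)
              = (\<Sum>e\<in>bad_errors (F l) (m l) (gamma l) \<alpha> \<epsilon>. \<bar>What (F l) (n l) (m l) (phi l) P e\<bar>^2)
           \<and> (\<Sum>e\<in>bad_errors (F l) (m l) (gamma l) \<alpha> \<epsilon>. \<bar>What (F l) (n l) (m l) (phi l) P e\<bar>^2) \<le> 2 * t^(m l)}
        \<subseteq> {P. (\<Sum>(x, e)\<in>BAD (F l) (m l) (gamma l) \<alpha> \<epsilon>. \<bar>Vhat (F l) (m l) (gamma l) \<alpha> x * What (F l) (n l) (m l) (phi l) P e\<bar>^2)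
              = (\<Sum>e\<in>bad_errors (F l) (m l) (gamma l) \<alpha> \<epsilon>. \<bar>What (F l) (n l) (m l) (phi l) P e\<bar>^2)
           \<and> (\<Sum>e\<in>bad_errors (F l) (m l) (gamma l) \<alpha> \<epsilon>. \<bar>What (F l) (n l) (m l) (phi l) P e\<bar>^2) \<le> mu l}"
        using tle[of l] by (auto simp: mu_def)
      have a: "1 - nu (n l) \<le> 1 - t^(m l)" using tle[of l] by simp
      have mono: "measure_pmf.prob (Pi_pmf {..<m l} (\<lambda>_. False) (D l)) {P. (\<Sum>(x, e)\<in>BAD (F l) (m l) (gamma l) \<alpha> \<epsilon>. \<bar>Vhat (F l) (m l) (gamma l) \<alpha> x * What (F l) (n l) (m l) (phi l) P e\<bar>^2)
              = (\<Sum>e\<in>bad_errors (F l) (m l) (gamma l) \<alpha> \<epsilon>. \<bar>What (F l) (n l) (m l) (phi l) P e\<bar>^2)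
           \<and> (\<Sum>e\<in>bad_errors (F l) (m l) (gamma l) \<alpha> \<epsilon>. \<bar>What (F l) (n l) (m l) (phi l) P e\<bar>^2) \<le> 2 * t^(m l)}
        \<le> measure_pmf.prob (Pi_pmf {..<m l} (\<lambda>_. False) (D l)) {P. (\<Sum>(x, e)\<in>BAD (F l) (m l) (gamma l) \<alpha> \<epsilon>. \<bar>Vhat (F l) (m l) (gamma l) \<alpha> x * What (F l) (n l) (m l) (phi l) P e\<bar>^2)
              = (\<Sum>e\<in>bad_errors (F l) (m l) (gamma l) \<alpha> \<epsilon>. \<bar>What (F l) (n l) (m l) (phi l) P e\<bar>^2)
           \<and> (\<Sum>e\<in>bad_errors (F l) (m l) (gamma l) \<alpha> \<epsilon>. \<bar>What (F l) (n l) (m l) (phi l) P e\<bar>^2) \<le> mu l}"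
        by (rule measure_pmf.finite_measure_mono[OF sub]) (rule sets_measure_pmf[THEN equalityD2, THEN subsetD], rule UNIV_I)
      from order.trans[OF a order.trans[OF lev mono]] show ?case .
    qed
  qed
qed

end
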